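(* In the setting below (Algorithm 3), for every agent $i$ and every strategy $f_i$, $$\mathbb E_{D\sim\Pi}\mathbb E_D[L_i(\mathrm{id},\dots,\mathrm{id})]\le\mathbb E_{D\sim\Pi}\mathbb E_D[L_i(f_i,(\mathrm{id})_{j\ne i})]+\varepsilon\quad\text{and}\quad\sup_{D\in\mathcal F}\mathbb E_D[L_i(\mathrm{id},\dots,\mathrm{id})]\le\sup_{D\in\mathcal F}\mathbb E_D[L_i(f_i,(\mathrm{id})_{j\ne i})]+\varepsilon$$ with $\varepsilon=\frac14\big(\frac1{|X_i|+|W_i|}+\frac1{|Z_i|}\big)$. Moreover, if for every $k$ the distribution of $\varphi_k(X)$, $X\sim D$, is continuous (atomless) for $\Pi$-almost every $D$ (Bayesian) resp. for every $D\in\mathcal F$ (frequentist), then the corresponding inequality holds with $\varepsilon=\frac1{6(|X_i|+|W_i|)}$.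
   Context: Setting (Algorithm 3). Fix $m\ge2$ agents, a measurable data space $\mathcal X$, measurable feature maps $\varphi_1,\dots,\varphi_K:\mathcal X\to\mathbb R$, and $s:\mathbb N\to\mathbb N$ with $s(n)<n-1$. Conditionally on a distribution $D$ on $\mathcal X$, agent $i$ holds $X_i=(X_{i,1},\dots,X_{i,n_i})$, $n_i\ge1$, i.i.d. from $D$, independent across agents. A strategy is a measurable map $f:\bigcup_{\ell\ge0}\mathcal X^\ell\to\bigcup_{\ell\ge0}\mathcal X^\ell$; agent $i$ submits $X_i'=f_i(X_i)$; $\mathrm{id}$ is the identity (truthful) strategy. $\varphi_k(S)=\{\varphi_k(x):x\in S\}$; for a finite multiset $S\subset\mathbb R$, $F_S(t)=\frac1{|S|}\sum_{s\in S}\mathbf 1\{s\le t\}$ (with $F_\emptyset\equiv 0$). Mechanism: $X'_{-i}=\bigcup_{j\ne i}X'_j$ is split uniformly at random as $\{T_i\}\cup W_i\cup Z_i$ with $|W_i|=s(|X'_{-i}|)$, and $L_i=\frac1K\sum_{k=1}^K\big(F_{\varphi_k(X_i'\cup W_i)}(\varphi_k(T_i))-F_{\varphi_k(Z_i)}(\varphi_k(T_i))\big)^2$. $\mathbb E_D$ is expectation over data i.i.d. from $D$ and all randomness; $\Pi$ is a prior over distributions on $\mathcal X$ (Bayesian), $\mathcal F$ a class of distributions on $\mathcal X$ (frequentist). $|W_i|,|Z_i|$ are determined by the other agents' (truthful) submissions. *)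

theory Defs
  imports "HOL-Probability.Probability"
begin

definition ecdf :: "real multiset \<Rightarrow> real \<Rightarrow> real" where
  "ecdf S t = (if S = {#} then 0
               else real (size (filter_mset (\<lambda>s. s \<le> t) S)) / real (size S))"

text \<open>Measurability w.r.t. the disjoint-union sigma-algebra on lists: on inputs of each length
  the output length is measurable and each output coordinate is measurable on the
  (measurable) set of inputs where it exists.\<close>
definition strategy_measurable :: "'a measure \<Rightarrow> ('a list \<Rightarrow> 'a list) \<Rightarrow> bool" where
  "strategy_measurable M g \<longleftrightarrow>
     (\<forall>l. (\<lambda>x. length (g (map x [0..<l])))
             \<in> measurable (PiM {..<l} (\<lambda>_. M)) (count_space UNIV)
        \<and> (\<forall>j. (\<lambda>x. g (map x [0..<l]) ! j)
             \<in> measurable (restrict_space (PiM {..<l} (\<lambda>_. M))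
                                          {x. j < length (g (map x [0..<l]))}) M))"

definition agent_data :: "(nat \<Rightarrow> nat) \<Rightarrow> (nat \<Rightarrow> nat \<Rightarrow> 'a) \<Rightarrow> nat \<Rightarrow> 'a list" where
  "agent_data n x j = map (x j) [0..<n j]"

definition others_pool :: "nat \<Rightarrow> (nat \<Rightarrow> nat) \<Rightarrow> nat \<Rightarrow> (nat \<Rightarrow> nat \<Rightarrow> 'a) \<Rightarrow> 'a list" where
  "others_pool m n i x = concat (map (agent_data n x) (filter (\<lambda>j. j \<noteq> i) [0..<m]))"

text \<open>All possible splits of positions {0..<N} into a single test position t, a set W of
  size w, and the rest Z = {0..<N} - {t} - W. Choosing uniformly from this set is the
  uniform random split of the mechanism.\<close>
definition splits :: "nat \<Rightarrow> nat \<Rightarrow> (nat \<times> nat set) set" where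
  "splits N w = {(t, W). t < N \<and> W \<subseteq> {..<N} - {t} \<and> card W = w}"

definition split_loss ::
  "nat \<Rightarrow> (nat \<Rightarrow> 'a \<Rightarrow> real) \<Rightarrow> 'a list \<Rightarrow> 'a list \<Rightarrow> nat \<Rightarrow> nat set \<Rightarrow> real" where
  "split_loss K \<phi> Xi' P t W =
     (let T = P ! t;
          A = mset Xi' + image_mset (\<lambda>p. P ! p) (mset_set W);
          Z = image_mset (\<lambda>p. P ! p) (mset_set ({..<length P} - {t} - W))
      in (1 / real K) * (\<Sum>k<K. (ecdf (image_mset (\<phi> k) A) (\<phi> k T)
                                   - ecdf (image_mset (\<phi> k) Z) (\<phi> k T))\<^sup>2))"

definition mech_loss ::
  "nat \<Rightarrow> (nat \<Rightarrow> 'a \<Rightarrow> real) \<Rightarrow> (nat \<Rightarrow> nat) \<Rightarrow> 'a list \<Rightarrow> 'a list \<Rightarrow> real" where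
  "mech_loss K \<phi> s Xi' P =
     (let S = splits (length P) (s (length P))
      in (\<Sum>(t, W)\<in>S. split_loss K \<phi> Xi' P t W) / real (card S))"

definition data_measure :: "nat \<Rightarrow> (nat \<Rightarrow> nat) \<Rightarrow> 'a measure \<Rightarrow> (nat \<Rightarrow> nat \<Rightarrow> 'a) measure" where
  "data_measure m n D = PiM {..<m} (\<lambda>j. PiM {..<n j} (\<lambda>_. D))"

definition expected_loss ::
  "nat \<Rightarrow> (nat \<Rightarrow> nat) \<Rightarrow> nat \<Rightarrow> (nat \<Rightarrow> 'a \<Rightarrow> real) \<Rightarrow> (nat \<Rightarrow> nat) \<Rightarrow> nat
     \<Rightarrow> 'a measure \<Rightarrow> ('a list \<Rightarrow> 'a list) \<Rightarrow> real" where
  "expected_loss m n K \<phi> s i D g =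
     (\<integral>x. mech_loss K \<phi> s (g (agent_data n x i)) (others_pool m n i x) \<partial>data_measure m n D)"

definition atomless_feature :: "'a measure \<Rightarrow> ('a \<Rightarrow> real) \<Rightarrow> bool" where
  "atomless_feature D f \<longleftrightarrow> (\<forall>t. measure (distr D borel f) {t} = 0)"

end

theory Submission
  imports Defs
begin


lemma integrable_bounded_prob:
  fixes H :: "'b \<Rightarrow> real"
  assumes "prob_space P" "H \<in> borel_measurable P" "\<forall>x\<in>space P. \<bar>H x\<bar> \<le> B"
  shows "integrable P H"
proof -
  interpret prob_space P by fact
  show ?thesis
    by (rule integrable_const_bound[where B=B]) (use assms in auto)
qed

lemma measurable_upd_pair:
  assumes io: "io \<in> I"
  shows "(\<lambda>(x, X). X(io := x)) \<in> measurable (M io \<Otimes>\<^sub>M PiM I M) (PiM I M)"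
proof -
  have e: "(\<lambda>(x, X). X(io := x)) = (\<lambda>\<omega> i. (\<lambda>i \<omega>. if i = io then fst \<omega> else snd \<omega> i) i \<omega>)"
    by (auto simp: fun_eq_iff)
  show ?thesis unfolding e
  proof (rule measurable_PiM_single')
    fix i assume "i \<in> I"
    show "(\<lambda>\<omega>. if i = io then fst \<omega> else snd \<omega> i) \<in> measurable (M io \<Otimes>\<^sub>M PiM I M) (M i)"
      by (cases "i = io") (use \<open>i \<in> I\<close> in auto)
  next
    show "(\<lambda>\<omega> i. if i = io then fst \<omega> else snd \<omega> i) \<in> space (M io \<Otimes>\<^sub>M PiM I M) \<rightarrow> (\<Pi>\<^sub>E i\<in>I. space (M i))"
      using io by (auto simp: space_pair_measure space_PiM PiE_iff extensional_def)
  qed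
qed

lemma resample1:
  fixes H :: "('i \<Rightarrow> 'b) \<Rightarrow> real"
  assumes M: "\<And>i. i \<in> I \<Longrightarrow> prob_space (M i)" and io: "io \<in> I"
    and Hm: "H \<in> borel_measurable (PiM I M)" and Hb: "\<forall>x\<in>space (PiM I M). \<bar>H x\<bar> \<le> B"
  shows "(\<integral>X. H X \<partial>PiM I M) = (\<integral>X. (\<integral>u. H (X(io := u)) \<partial>M io) \<partial>PiM I M)"
proof -
  have ins: "insert io I = I" using io by auto
  have eq: "distr (M io \<Otimes>\<^sub>M PiM I M) (PiM I M) (\<lambda>(x, X). X(io := x)) = PiM I M"
    using distr_pair_PiM_eq_PiM[of I M io] M io by (simp add: ins)
  interpret P: prob_space "PiM I M" using M by (intro prob_space_PiM) auto
  interpret Mi: prob_space "M io" using M io by auto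
  interpret pair_sigma_finite "M io" "PiM I M" ..
  interpret PP: prob_space "M io \<Otimes>\<^sub>M PiM I M" by (simp add: P.prob_space_axioms Mi.prob_space_axioms prob_space_pair)
  have um: "(\<lambda>(x, X). X(io := x)) \<in> measurable (M io \<Otimes>\<^sub>M PiM I M) (PiM I M)"
    using io by (rule measurable_upd_pair)
  have "(\<integral>X. H X \<partial>PiM I M) = (\<integral>X. H X \<partial>distr (M io \<Otimes>\<^sub>M PiM I M) (PiM I M) (\<lambda>(x, X). X(io := x)))"
    by (simp add: eq)
  also have "\<dots> = (\<integral>z. H ((\<lambda>(x, X). X(io := x)) z) \<partial>(M io \<Otimes>\<^sub>M PiM I M))"
    by (rule integral_distr[OF um Hm])
  also have "\<dots> = (\<integral>z. (\<lambda>x X. H (X(io := x))) (fst z) (snd z) \<partial>(M io \<Otimes>\<^sub>M PiM I M))"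
    by (simp add: case_prod_beta)
  also have "\<dots> = (\<integral>X. (\<integral>u. H (X(io := u)) \<partial>M io) \<partial>PiM I M)"
  proof -
    have hm: "(\<lambda>z. H ((\<lambda>(x, X). X(io := x)) z)) \<in> borel_measurable (M io \<Otimes>\<^sub>M PiM I M)"
      using measurable_comp[OF um Hm] by (simp add: comp_def)
    have int: "integrable (M io \<Otimes>\<^sub>M PiM I M) (case_prod (\<lambda>x X. H (X(io := x))))"
    proof (rule integrable_bounded_prob[where B=B])
      show "prob_space (M io \<Otimes>\<^sub>M PiM I M)" by (rule PP.prob_space_axioms)
      show "case_prod (\<lambda>x X. H (X(io := x))) \<in> borel_measurable (M io \<Otimes>\<^sub>M PiM I M)"
        using hm by (simp add: case_prod_beta')
      show "\<forall>x\<in>space (M io \<Otimes>\<^sub>M PiM I M). \<bar>case_prod (\<lambda>x X. H (X(io := x))) x\<bar> \<le> B"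
        using Hb measurable_space[OF um] by (auto simp: space_pair_measure)
    qed
    show ?thesis using integral_snd[OF int] by (simp add: case_prod_beta')
  qed
  finally show ?thesis .
qed

lemma measurable_upd_fix:
  assumes io: "io \<in> I" and X: "X \<in> space (PiM I M)"
  shows "(\<lambda>u. X(io := u)) \<in> measurable (M io) (PiM I M)"
proof -
  have e: "(\<lambda>u. X(io := u)) = (\<lambda>\<omega> i. (\<lambda>i \<omega>. if i = io then \<omega> else X i) i \<omega>)"
    by (auto simp: fun_eq_iff)
  show ?thesis unfolding e
  proof (rule measurable_PiM_single')
    fix i assume "i \<in> I"
    show "(\<lambda>\<omega>. if i = io then \<omega> else X i) \<in> measurable (M io) (M i)"
    proof (cases "i = io")
      case False
      have "X i \<in> space (M i)" using X \<open>i \<in> I\<close> by (auto simp: space_PiM)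
      then show ?thesis using False by (simp add: measurable_const)
    qed simp
  next
    show "(\<lambda>\<omega> i. if i = io then \<omega> else X i) \<in> space (M io) \<rightarrow> (\<Pi>\<^sub>E i\<in>I. space (M i))"
      using io X by (auto simp: space_PiM PiE_iff extensional_def)
  qed
qed

lemma measurable_upd2:
  assumes j0: "j0 \<in> I" and p0: "p0 \<in> J j0"
  shows "(\<lambda>(X, y). X(j0 := (X j0)(p0 := y))) \<in> measurable (PiM I (\<lambda>j. PiM (J j) (\<lambda>_. D)) \<Otimes>\<^sub>M D) (PiM I (\<lambda>j. PiM (J j) (\<lambda>_. D)))"
proof -
  let ?S = "PiM I (\<lambda>j. PiM (J j) (\<lambda>_. D)) \<Otimes>\<^sub>M D"
  have inner: "(\<lambda>\<omega>. (fst \<omega> j0)(p0 := snd \<omega>)) \<in> measurable ?S (PiM (J j0) (\<lambda>_. D))"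
  proof -
    have e: "(\<lambda>\<omega>. (fst \<omega> j0)(p0 := snd \<omega>)) = (\<lambda>\<omega> p. (\<lambda>p \<omega>. if p = p0 then snd \<omega> else fst \<omega> j0 p) p \<omega>)"
      by (auto simp: fun_eq_iff)
    show ?thesis unfolding e
    proof (rule measurable_PiM_single')
      fix p assume "p \<in> J j0"
      show "(\<lambda>\<omega>. if p = p0 then snd \<omega> else fst \<omega> j0 p) \<in> measurable ?S D"
      proof (cases "p = p0")
        case False
        have "(\<lambda>\<omega>. fst \<omega> j0 p) \<in> measurable ?S D"
          by (rule measurable_compose[OF measurable_fst], rule measurable_compose[OF measurable_component_singleton[OF j0]], rule measurable_component_singleton) (use \<open>p \<in> J j0\<close> in simp)
        then show ?thesis using False by simp
      qed simp
    next
      show "(\<lambda>\<omega> p. if p = p0 then snd \<omega> else fst \<omega> j0 p) \<in> space ?S \<rightarrow> (\<Pi>\<^sub>E i\<in>J j0. space D)"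
        using j0 p0 by (auto simp: space_pair_measure space_PiM PiE_iff extensional_def)
    qed
  qed
  have e: "(\<lambda>(X, y). X(j0 := (X j0)(p0 := y))) = (\<lambda>\<omega> j. (\<lambda>j \<omega>. if j = j0 then (fst \<omega> j0)(p0 := snd \<omega>) else fst \<omega> j) j \<omega>)"
    by (auto simp: fun_eq_iff)
  show ?thesis unfolding e
  proof (rule measurable_PiM_single')
    fix j assume "j \<in> I"
    show "(\<lambda>\<omega>. if j = j0 then (fst \<omega> j0)(p0 := snd \<omega>) else fst \<omega> j) \<in> measurable ?S (PiM (J j) (\<lambda>_. D))"
      by (cases "j = j0") (use \<open>j \<in> I\<close> inner in auto)
  next
    show "(\<lambda>\<omega> j. if j = j0 then (fst \<omega> j0)(p0 := snd \<omega>) else fst \<omega> j) \<in> space ?S \<rightarrow> (\<Pi>\<^sub>E j\<in>I. space (PiM (J j) (\<lambda>_. D)))"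
      using j0 p0 by (auto simp: space_pair_measure space_PiM PiE_iff extensional_def)
  qed
qed

lemma abs_integral_bound_prob:
  fixes f :: "'b \<Rightarrow> real"
  assumes "prob_space P" "\<forall>x\<in>space P. \<bar>f x\<bar> \<le> B"
  shows "\<bar>integral\<^sup>L P f\<bar> \<le> B"
proof -
  interpret prob_space P by fact
  obtain x where x: "x \<in> space P" using not_empty by auto
  have B0: "0 \<le> B" using assms(2) x by (meson abs_ge_zero order_trans)
  show ?thesis
  proof (cases "integrable P f")
    case True
    have "\<bar>integral\<^sup>L P f\<bar> \<le> (\<integral>x. \<bar>f x\<bar> \<partial>P)" by (rule integral_abs_bound)
    also have "\<dots> \<le> (\<integral>x. B \<partial>P)"
      using True assms(2) by (intro integral_mono) auto
    finally show ?thesis by (simp add: prob_space)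
  next
    case False then show ?thesis using B0 by (simp add: not_integrable_integral_eq)
  qed
qed

lemma resample2:
  fixes H :: "(nat \<Rightarrow> nat \<Rightarrow> 'a) \<Rightarrow> real"
  assumes D: "prob_space D" and j0: "j0 < m" and p0: "p0 < n j0"
    and Hm: "H \<in> borel_measurable (data_measure m n D)"
    and Hb: "\<forall>x\<in>space (data_measure m n D). \<bar>H x\<bar> \<le> B"
  shows "(\<integral>X. H X \<partial>data_measure m n D) = (\<integral>X. (\<integral>y. H (X(j0 := (X j0)(p0 := y))) \<partial>D) \<partial>data_measure m n D)"
proof -
  let ?Q = "\<lambda>j. PiM {..<n j} (\<lambda>_. D)"
  let ?mu = "data_measure m n D"
  have mu: "?mu = PiM {..<m} ?Q" by (simp add: data_measure_def)
  have Qp: "\<And>j. prob_space (?Q j)" using D by (intro prob_space_PiM) auto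
  interpret P: prob_space ?mu unfolding mu by (rule prob_space_PiM) (rule Qp)
  interpret DD: prob_space D by fact
  define \<Phi> where "\<Phi> X = (\<integral>y. H (X(j0 := (X j0)(p0 := y))) \<partial>D)" for X
  have um: "(\<lambda>(X, y). X(j0 := (X j0)(p0 := y))) \<in> measurable (?mu \<Otimes>\<^sub>M D) ?mu"
    unfolding mu using measurable_upd2[of j0 "{..<m}" p0 "\<lambda>j. {..<n j}" D] j0 p0 by auto
  have Phim: "\<Phi> \<in> borel_measurable ?mu"
    unfolding \<Phi>_def
    by (rule DD.borel_measurable_lebesgue_integral)
       (use measurable_comp[OF um Hm] in \<open>simp add: comp_def case_prod_beta'\<close>)
  have Phib: "\<forall>X\<in>space ?mu. \<bar>\<Phi> X\<bar> \<le> B"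
  proof
    fix X assume X: "X \<in> space ?mu"
    show "\<bar>\<Phi> X\<bar> \<le> B" unfolding \<Phi>_def
      by (rule abs_integral_bound_prob[OF D]) (use Hb measurable_space[OF um] X in \<open>auto simp: space_pair_measure\<close>)
  qed
  have step1: "(\<integral>X. H X \<partial>?mu) = (\<integral>X. (\<integral>u. H (X(j0 := u)) \<partial>?Q j0) \<partial>?mu)"
    unfolding mu by (rule resample1[where B=B]) (use D Qp j0 Hm Hb mu in auto)
  have step2: "(\<integral>u. H (X(j0 := u)) \<partial>?Q j0) = (\<integral>u. \<Phi> (X(j0 := u)) \<partial>?Q j0)"
    if X: "X \<in> space ?mu" for X
  proof -
    have fm: "(\<lambda>u. X(j0 := u)) \<in> measurable (?Q j0) ?mu"
      unfolding mu by (rule measurable_upd_fix) (use j0 X mu in auto)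
    have "(\<integral>u. H (X(j0 := u)) \<partial>?Q j0) = (\<integral>u. (\<integral>y. (\<lambda>u. H (X(j0 := u))) (u(p0 := y)) \<partial>D) \<partial>?Q j0)"
      by (rule resample1[where B=B and H="\<lambda>u. H (X(j0 := u))" and M="\<lambda>_. D" and I="{..<n j0}" and io=p0]) (use D p0 measurable_comp[OF fm Hm] Hb measurable_space[OF fm] in \<open>auto simp: comp_def\<close>)
    also have "\<dots> = (\<integral>u. \<Phi> (X(j0 := u)) \<partial>?Q j0)"
      by (simp add: \<Phi>_def)
    finally show ?thesis .
  qed
  have "(\<integral>X. H X \<partial>?mu) = (\<integral>X. (\<integral>u. \<Phi> (X(j0 := u)) \<partial>?Q j0) \<partial>?mu)"
    unfolding step1 by (rule Bochner_Integration.integral_cong[OF refl]) (rule step2)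
  also have "\<dots> = (\<integral>X. \<Phi> X \<partial>?mu)"
    unfolding mu by (rule resample1[symmetric, where B=B]) (use Qp j0 Phim Phib mu in auto)
  finally show ?thesis unfolding \<Phi>_def .
qed



definition xc :: "(nat \<Rightarrow> nat \<Rightarrow> 'a) \<Rightarrow> nat \<times> nat \<Rightarrow> 'a" where
  "xc X c = X (fst c) (snd c)"

definition updc :: "nat \<times> nat \<Rightarrow> (nat \<Rightarrow> nat \<Rightarrow> 'a) \<Rightarrow> 'a \<Rightarrow> (nat \<Rightarrow> nat \<Rightarrow> 'a)" where
  "updc c X y = X(fst c := (X (fst c))(snd c := y))"

definition invc :: "nat \<times> nat \<Rightarrow> ((nat \<Rightarrow> nat \<Rightarrow> 'a) \<Rightarrow> 'b) \<Rightarrow> bool" where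
  "invc c H \<longleftrightarrow> (\<forall>X y. H (updc c X y) = H X)"

lemma xc_updc: "xc (updc c X y) d = (if d = c then y else xc X d)"
  by (cases c; cases d) (auto simp: xc_def updc_def)

definition ind :: "bool \<Rightarrow> real" where "ind b = (if b then 1 else 0)"

lemma ind_bounds[simp]: "0 \<le> ind b" "ind b \<le> 1" "\<bar>ind b\<bar> \<le> 1" "ind b * ind b = ind b"
  by (auto simp: ind_def)

locale cfg =
  fixes D :: "'a measure" and m :: nat and n :: "nat \<Rightarrow> nat" and \<psi> :: "'a \<Rightarrow> real"
  assumes probD: "prob_space D" and \<psi>m[measurable]: "\<psi> \<in> borel_measurable D"
begin

abbreviation "\<mu> \<equiv> data_measure m n D"
definition "Cd = {c. fst c < m \<and> snd c < n (fst c)}"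
definition "Gd t = measure D {y \<in> space D. \<psi> y \<le> t}"
definition "p1 = (\<integral>y. Gd (\<psi> y) \<partial>D)"
definition "p2 = (\<integral>y. (Gd (\<psi> y))\<^sup>2 \<partial>D)"

lemma prob_mu: "prob_space \<mu>"
  unfolding data_measure_def
  by (rule prob_space_PiM, rule prob_space_PiM) (use probD in auto)

sublocale P: prob_space \<mu> by (rule prob_mu)
sublocale DD: prob_space D by (rule probD)

lemma xc_meas: assumes c: "c \<in> Cd" shows "(\<lambda>X. xc X c) \<in> measurable \<mu> D"
proof -
  have c1: "fst c \<in> {..<m}" and c2: "snd c \<in> {..<n (fst c)}" using c by (auto simp: Cd_def)
  show ?thesis
    unfolding xc_def data_measure_def
    by (rule measurable_compose[OF measurable_component_singleton[OF c1, of "\<lambda>j. PiM {..<n j} (\<lambda>_. D)"] measurable_component_singleton[OF c2, of "\<lambda>_. D"]])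
qed

lemma Gd_mono: "mono Gd"
  unfolding Gd_def mono_def
proof (intro allI impI)
  fix x y :: real assume "x \<le> y"
  show "measure D {y \<in> space D. \<psi> y \<le> x} \<le> measure D {ya \<in> space D. \<psi> ya \<le> y}"
    apply (rule DD.finite_measure_mono)
    using \<open>x \<le> y\<close> apply force
    by measurable
qed

lemma Gd_meas[measurable]: "Gd \<in> borel_measurable borel"
  by (rule borel_measurable_mono[OF Gd_mono])

lemma Gd_bounds: "0 \<le> Gd t" "Gd t \<le> 1"
  unfolding Gd_def by auto

lemma ind_le_meas[measurable]: "(\<lambda>(s, t). ind (s \<le> (t::real))) \<in> borel_measurable (borel \<Otimes>\<^sub>M borel)"
  unfolding ind_def by measurable

lemma ind_eq_meas[measurable]: "(\<lambda>(s, t). ind (s = (t::real))) \<in> borel_measurable (borel \<Otimes>\<^sub>M borel)"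
  unfolding ind_def by measurable

lemma integrable_mu:
  fixes f :: "_ \<Rightarrow> real"
  assumes "f \<in> borel_measurable \<mu>" "\<And>x. x \<in> space \<mu> \<Longrightarrow> \<bar>f x\<bar> \<le> B"
  shows "integrable \<mu> f"
  using integrable_bounded_prob[OF prob_mu assms(1)] assms(2) by blast

lemma M0:
  fixes h :: "'a \<Rightarrow> real"
  assumes c: "c \<in> Cd" and h: "h \<in> borel_measurable D" and hb: "\<And>y. y \<in> space D \<Longrightarrow> \<bar>h y\<bar> \<le> B"
  shows "(\<integral>X. h (xc X c) \<partial>\<mu>) = (\<integral>y. h y \<partial>D)"
proof -
  have "(\<integral>X. h (xc X c) \<partial>\<mu>) = (\<integral>X. (\<integral>y. h (xc (updc c X y) c) \<partial>D) \<partial>\<mu>)"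
  proof -
    have c1: "fst c < m" and c2: "snd c < n (fst c)" using c by (auto simp: Cd_def)
    have hm: "(\<lambda>X. h (xc X c)) \<in> borel_measurable \<mu>" using measurable_compose[OF xc_meas[OF c] h] .
    have hb': "\<forall>x\<in>space \<mu>. \<bar>h (xc x c)\<bar> \<le> B"
      using hb measurable_space[OF xc_meas[OF c]] by blast
    show ?thesis unfolding updc_def by (rule resample2[OF probD c1 c2 hm hb'])
  qed
  also have "\<dots> = (\<integral>y. h y \<partial>D)" by (simp add: xc_updc P.prob_space)
  finally show ?thesis .
qed

lemma M1:
  fixes H V :: "(nat \<Rightarrow> nat \<Rightarrow> 'a) \<Rightarrow> real" and \<rho> :: "real \<Rightarrow> real \<Rightarrow> real"
  assumes b: "b \<in> Cd"
    and Hm: "H \<in> borel_measurable \<mu>" and Hb: "\<And>X. X \<in> space \<mu> \<Longrightarrow> \<bar>H X\<bar> \<le> B"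
    and Vm: "V \<in> borel_measurable \<mu>"
    and Hi: "invc b H" and Vi: "invc b V"
    and \<rho>m: "(\<lambda>(s, t). \<rho> s t) \<in> borel_measurable (borel \<Otimes>\<^sub>M borel)"
    and \<rho>b: "\<And>s t. \<bar>\<rho> s t\<bar> \<le> 1"
  shows "(\<integral>X. H X * \<rho> (\<psi> (xc X b)) (V X) \<partial>\<mu>) = (\<integral>X. H X * (\<integral>y. \<rho> (\<psi> y) (V X) \<partial>D) \<partial>\<mu>)"
proof -
  have b1: "fst b < m" and b2: "snd b < n (fst b)" using b by (auto simp: Cd_def)
  have m1: "(\<lambda>X. H X * \<rho> (\<psi> (xc X b)) (V X)) \<in> borel_measurable \<mu>"
  proof -
    have pm: "(\<lambda>X. (\<psi> (xc X b), V X)) \<in> measurable \<mu> (borel \<Otimes>\<^sub>M borel)"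
      by (rule measurable_Pair[OF measurable_compose[OF xc_meas[OF b] \<psi>m] Vm])
    have "(\<lambda>X. (\<lambda>(s, t). \<rho> s t) (\<psi> (xc X b), V X)) \<in> borel_measurable \<mu>"
      by (rule measurable_compose[OF pm \<rho>m])
    then have "(\<lambda>X. \<rho> (\<psi> (xc X b)) (V X)) \<in> borel_measurable \<mu>" by (simp only: case_prod_conv)
    then show ?thesis by (rule borel_measurable_times[OF Hm])
  qed
  have "(\<integral>X. H X * \<rho> (\<psi> (xc X b)) (V X) \<partial>\<mu>) = (\<integral>X. (\<integral>y. H (updc b X y) * \<rho> (\<psi> (xc (updc b X y) b)) (V (updc b X y)) \<partial>D) \<partial>\<mu>)"
    unfolding updc_def
  proof (rule resample2[OF probD b1 b2 m1, where B=B])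
    show "\<forall>x\<in>space \<mu>. \<bar>H x * \<rho> (\<psi> (xc x b)) (V x)\<bar> \<le> B"
    proof
      fix x assume "x \<in> space \<mu>"
      have "\<bar>H x * \<rho> (\<psi> (xc x b)) (V x)\<bar> = \<bar>H x\<bar> * \<bar>\<rho> (\<psi> (xc x b)) (V x)\<bar>" by (simp add: abs_mult)
      also have "\<dots> \<le> B * 1" using Hb[OF \<open>x \<in> space \<mu>\<close>] \<rho>b by (intro mult_mono) auto
      finally show "\<bar>H x * \<rho> (\<psi> (xc x b)) (V x)\<bar> \<le> B" by simp
    qed
  qed
  also have "\<dots> = (\<integral>X. (\<integral>y. H X * \<rho> (\<psi> y) (V X) \<partial>D) \<partial>\<mu>)"
    using Hi Vi by (simp add: invc_def xc_updc)
  also have "\<dots> = (\<integral>X. H X * (\<integral>y. \<rho> (\<psi> y) (V X) \<partial>D) \<partial>\<mu>)"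
    by simp
  finally show ?thesis .
qed

lemma int_ind_le: "(\<integral>y. ind (\<psi> y \<le> t) \<partial>D) = Gd t"
proof -
  have "(\<integral>y. ind (\<psi> y \<le> t) \<partial>D) = (\<integral>y. indicator {y \<in> space D. \<psi> y \<le> t} y \<partial>D)"
    by (rule Bochner_Integration.integral_cong) (auto simp: ind_def indicator_def)
  also have "\<dots> = Gd t" by (simp add: Gd_def Int_absorb2[of _ "space D"] Collect_subset[THEN Int_absorb2])
  finally show ?thesis .
qed

end



context cfg begin

definition "bm f \<longleftrightarrow> f \<in> borel_measurable \<mu> \<and> (\<exists>B. \<forall>x\<in>space \<mu>. \<bar>f x :: real\<bar> \<le> B)"

lemma bm_int: "bm f \<Longrightarrow> integrable \<mu> f"
  unfolding bm_def using integrable_mu by blast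

lemma bm_add: "bm f \<Longrightarrow> bm g \<Longrightarrow> bm (\<lambda>x. f x + g x)"
  unfolding bm_def
proof (elim conjE exE, intro conjI)
  fix B1 B2 assume "\<forall>x\<in>space \<mu>. \<bar>f x\<bar> \<le> B1" "\<forall>x\<in>space \<mu>. \<bar>g x\<bar> \<le> B2"
  then show "\<exists>B. \<forall>x\<in>space \<mu>. \<bar>f x + g x\<bar> \<le> B"
    by (intro exI[of _ "B1 + B2"]) (metis abs_triangle_ineq add_mono order_trans)
qed auto

lemma bm_diff: "bm f \<Longrightarrow> bm g \<Longrightarrow> bm (\<lambda>x. f x - g x)"
  unfolding bm_def
proof (elim conjE exE, intro conjI)
  fix B1 B2 assume "\<forall>x\<in>space \<mu>. \<bar>f x\<bar> \<le> B1" "\<forall>x\<in>space \<mu>. \<bar>g x\<bar> \<le> B2"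
  then show "\<exists>B. \<forall>x\<in>space \<mu>. \<bar>f x - g x\<bar> \<le> B"
    by (intro exI[of _ "B1 + B2"]) (metis abs_triangle_ineq4 add_mono order_trans)
qed auto

lemma bm_mult: "bm f \<Longrightarrow> bm g \<Longrightarrow> bm (\<lambda>x. f x * g x)"
  unfolding bm_def
proof (elim conjE exE, intro conjI)
  fix B1 B2 assume 1: "\<forall>x\<in>space \<mu>. \<bar>f x\<bar> \<le> B1" and 2: "\<forall>x\<in>space \<mu>. \<bar>g x\<bar> \<le> B2"
  show "\<exists>B. \<forall>x\<in>space \<mu>. \<bar>f x * g x\<bar> \<le> B"
  proof (intro exI[of _ "B1 * B2"] ballI)
    fix x assume x: "x \<in> space \<mu>"
    have "\<bar>f x * g x\<bar> = \<bar>f x\<bar> * \<bar>g x\<bar>" by (simp add: abs_mult)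
    also have "\<dots> \<le> B1 * B2" using 1 2 x by (intro mult_mono) (auto intro: order_trans[OF abs_ge_zero])
    finally show "\<bar>f x * g x\<bar> \<le> B1 * B2" .
  qed
qed auto

lemma bm_const: "bm (\<lambda>x. c)"
  unfolding bm_def by auto

lemma bm_cmult: "bm f \<Longrightarrow> bm (\<lambda>x. c * f x)"
  using bm_mult[OF bm_const] .

lemma bm_sum: "finite A \<Longrightarrow> (\<And>a. a \<in> A \<Longrightarrow> bm (f a)) \<Longrightarrow> bm (\<lambda>x. \<Sum>a\<in>A. f a x)"
proof (induction A rule: finite_induct)
  case empty then show ?case by (simp add: bm_const)
next
  case (insert a A) then show ?case by (simp add: bm_add)
qed

lemma bm_div: "bm f \<Longrightarrow> bm (\<lambda>x. f x / c)"
  using bm_cmult[of f "1/c"] by simp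

lemma bm_sq: "bm f \<Longrightarrow> bm (\<lambda>x. (f x)\<^sup>2)"
  using bm_mult[of f f] by (simp add: power2_eq_square)

definition "Ic c d X = ind (\<psi> (xc X c) \<le> \<psi> (xc X d))"
definition "Gc d X = Gd (\<psi> (xc X d))"

lemma bm_Ic: assumes "c \<in> Cd" "d \<in> Cd" shows "bm (Ic c d)"
proof -
  have pm: "(\<lambda>X. (\<psi> (xc X c), \<psi> (xc X d))) \<in> measurable \<mu> (borel \<Otimes>\<^sub>M borel)"
    by (rule measurable_Pair[OF measurable_compose[OF xc_meas[OF assms(1)] \<psi>m] measurable_compose[OF xc_meas[OF assms(2)] \<psi>m]])
  have "(\<lambda>X. (\<lambda>(s, t). ind (s \<le> t)) (\<psi> (xc X c), \<psi> (xc X d))) \<in> borel_measurable \<mu>"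
    by (rule measurable_compose[OF pm ind_le_meas])
  then have "Ic c d \<in> borel_measurable \<mu>" unfolding Ic_def by (simp only: case_prod_conv)
  then show ?thesis unfolding bm_def Ic_def by (intro conjI exI[of _ 1]) auto
qed

lemma bm_Gc: assumes "d \<in> Cd" shows "bm (Gc d)"
proof -
  have "Gc d \<in> borel_measurable \<mu>" unfolding Gc_def
    by (rule measurable_compose[OF measurable_compose[OF xc_meas[OF assms] \<psi>m] Gd_meas])
  then show ?thesis unfolding bm_def Gc_def using Gd_bounds by (intro conjI exI[of _ 1]) auto
qed

lemma invc_Ic: "c \<noteq> a \<Longrightarrow> c \<noteq> b \<Longrightarrow> invc c (Ic a b)"
  unfolding invc_def Ic_def by (simp add: xc_updc)

lemma invc_Gc: "c \<noteq> a \<Longrightarrow> invc c (Gc a)"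
  unfolding invc_def Gc_def by (simp add: xc_updc)

lemma E_G: "d \<in> Cd \<Longrightarrow> (\<integral>X. Gc d X \<partial>\<mu>) = p1"
  unfolding Gc_def p1_def
  by (rule M0[where B=1]) (use Gd_bounds in auto)

lemma E_G2: "d \<in> Cd \<Longrightarrow> (\<integral>X. (Gc d X)\<^sup>2 \<partial>\<mu>) = p2"
  unfolding Gc_def p2_def
  by (rule M0[where B=1, where h="\<lambda>y. (Gd (\<psi> y))\<^sup>2"]) (use Gd_bounds in \<open>auto simp: abs_square_le_1\<close>)

lemma E_HI:
  assumes c: "c \<in> Cd" and d: "d \<in> Cd" and cd: "c \<noteq> d" and H: "bm H" and Hi: "invc c H"
  shows "(\<integral>X. H X * Ic c d X \<partial>\<mu>) = (\<integral>X. H X * Gc d X \<partial>\<mu>)"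
proof -
  obtain B where Hm: "H \<in> borel_measurable \<mu>" and Hb: "\<And>x. x \<in> space \<mu> \<Longrightarrow> \<bar>H x\<bar> \<le> B"
    using H unfolding bm_def by blast
  have Vm: "(\<lambda>X. \<psi> (xc X d)) \<in> borel_measurable \<mu>" by (rule measurable_compose[OF xc_meas[OF d] \<psi>m])
  have Vi: "invc c (\<lambda>X. \<psi> (xc X d))" unfolding invc_def using cd by (simp add: xc_updc)
  have "(\<integral>X. H X * ind (\<psi> (xc X c) \<le> \<psi> (xc X d)) \<partial>\<mu>) = (\<integral>X. H X * (\<integral>y. ind (\<psi> y \<le> \<psi> (xc X d)) \<partial>D) \<partial>\<mu>)"
    by (rule M1[OF c Hm Hb Vm Hi Vi ind_le_meas]) (assumption, rule ind_bounds(3))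
  then show ?thesis by (simp add: Ic_def Gc_def int_ind_le)
qed

lemma E_I:
  assumes c: "c \<in> Cd" and d: "d \<in> Cd" and cd: "c \<noteq> d"
  shows "(\<integral>X. Ic c d X \<partial>\<mu>) = p1"
  using E_HI[OF c d cd bm_const, of 1] E_G[OF d] by (simp add: invc_def)

lemma E_GI:
  assumes c: "c \<in> Cd" and d: "d \<in> Cd" and cd: "c \<noteq> d"
  shows "(\<integral>X. Gc d X * Ic c d X \<partial>\<mu>) = p2"
  using E_HI[OF c d cd bm_Gc[OF d] invc_Gc[OF cd]] E_G2[OF d] by (simp add: power2_eq_square)

lemma E_II:
  assumes c: "c \<in> Cd" and c': "c' \<in> Cd" and d: "d \<in> Cd" and cd: "c \<noteq> d" "c' \<noteq> d" "c \<noteq> c'"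
  shows "(\<integral>X. Ic c' d X * Ic c d X \<partial>\<mu>) = p2"
proof -
  have "(\<integral>X. Ic c' d X * Ic c d X \<partial>\<mu>) = (\<integral>X. Ic c' d X * Gc d X \<partial>\<mu>)"
    by (rule E_HI[OF c d cd(1) bm_Ic[OF c' d] invc_Ic]) (use cd in auto)
  also have "\<dots> = (\<integral>X. Gc d X * Ic c' d X \<partial>\<mu>)" by (simp add: mult.commute)
  also have "\<dots> = p2" by (rule E_GI[OF c' d cd(2)])
  finally show ?thesis .
qed

end



context cfg begin

lemma sum_if_eq:
  assumes "finite C" "c \<in> C"
  shows "(\<Sum>c'\<in>C. if c' = c then a else b) = a + (real (card C) - 1) * (b::real)"
proof -
  have "(\<Sum>c'\<in>C. if c' = c then a else b) = (if c = c then a else b) + (\<Sum>c'\<in>C - {c}. if c' = c then a else b)"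
    using assms by (rule sum.remove)
  also have "(\<Sum>c'\<in>C - {c}. if c' = c then a else b) = (\<Sum>c'\<in>C - {c}. b)"
    by (rule sum.cong) auto
  also have "\<dots> = (real (card C) - 1) * b"
  proof -
    have "card C \<ge> 1" using assms by (metis One_nat_def Suc_leI card_gt_0_iff empty_iff)
    then show ?thesis using assms by (simp add: card_Diff_singleton of_nat_diff)
  qed
  finally show ?thesis by simp
qed

lemma LemmaV:
  assumes C: "finite C" "C \<subseteq> Cd" "C \<noteq> {}" and d: "d \<in> Cd" "d \<notin> C"
  shows "(\<integral>X. (Gc d X - (\<Sum>c\<in>C. Ic c d X) / real (card C))\<^sup>2 \<partial>\<mu>) = (p1 - p2) / real (card C)"
proof -
  define k where "k = real (card C)"
  have k0: "k > 0" using C by (simp add: k_def card_gt_0_iff)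
  have cC: "\<And>c. c \<in> C \<Longrightarrow> c \<in> Cd" "\<And>c. c \<in> C \<Longrightarrow> c \<noteq> d" using C d by auto
  have pw: "(Gc d X - (\<Sum>c\<in>C. Ic c d X) / k)\<^sup>2 =
      (Gc d X)\<^sup>2 - (2 / k) * (\<Sum>c\<in>C. Gc d X * Ic c d X) + (1 / k\<^sup>2) * (\<Sum>c\<in>C. \<Sum>c'\<in>C. Ic c' d X * Ic c d X)" for X
  proof -
    have "(\<Sum>c\<in>C. Ic c d X) * (\<Sum>c\<in>C. Ic c d X) = (\<Sum>c\<in>C. \<Sum>c'\<in>C. Ic c' d X * Ic c d X)"
      by (subst sum_product) (rule sum.swap)
    then show ?thesis
      using k0 by (simp add: power2_eq_square sum_distrib_left field_simps)
  qed
  have iG2: "integrable \<mu> (\<lambda>X. (Gc d X)\<^sup>2)" by (rule bm_int, rule bm_sq, rule bm_Gc[OF d(1)])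
  have iGI: "integrable \<mu> (\<lambda>X. Gc d X * Ic c d X)" if "c \<in> C" for c
    by (rule bm_int, rule bm_mult, rule bm_Gc[OF d(1)], rule bm_Ic[OF cC(1)[OF that] d(1)])
  have iII: "integrable \<mu> (\<lambda>X. Ic c' d X * Ic c d X)" if "c \<in> C" "c' \<in> C" for c c'
    by (rule bm_int, rule bm_mult, rule bm_Ic[OF cC(1)[OF that(2)] d(1)], rule bm_Ic[OF cC(1)[OF that(1)] d(1)])
  have iS1: "integrable \<mu> (\<lambda>X. \<Sum>c\<in>C. Gc d X * Ic c d X)"
    by (rule Bochner_Integration.integrable_sum, rule iGI)
  have iS2: "integrable \<mu> (\<lambda>X. \<Sum>c\<in>C. \<Sum>c'\<in>C. Ic c' d X * Ic c d X)"
    by (rule Bochner_Integration.integrable_sum, rule Bochner_Integration.integrable_sum, rule iII)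
  have EII: "(\<integral>X. Ic c' d X * Ic c d X \<partial>\<mu>) = (if c' = c then p1 else p2)" if "c \<in> C" "c' \<in> C" for c c'
  proof (cases "c' = c")
    case True
    have "(\<lambda>X. Ic c d X * Ic c d X) = Ic c d" by (simp add: Ic_def fun_eq_iff)
    then show ?thesis using E_I[OF cC(1)[OF that(1)] d(1) cC(2)[OF that(1)]] True by simp
  next
    case False
    then show ?thesis using E_II[OF cC(1)[OF that(1)] cC(1)[OF that(2)] d(1) cC(2)[OF that(1)] cC(2)[OF that(2)]] by auto
  qed
  have "(\<integral>X. (Gc d X - (\<Sum>c\<in>C. Ic c d X) / k)\<^sup>2 \<partial>\<mu>) =
      (\<integral>X. (Gc d X)\<^sup>2 - (2 / k) * (\<Sum>c\<in>C. Gc d X * Ic c d X) + (1 / k\<^sup>2) * (\<Sum>c\<in>C. \<Sum>c'\<in>C. Ic c' d X * Ic c d X) \<partial>\<mu>)"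
    by (simp only: pw)
  also have "\<dots> = (\<integral>X. (Gc d X)\<^sup>2 \<partial>\<mu>) - (2 / k) * (\<integral>X. (\<Sum>c\<in>C. Gc d X * Ic c d X) \<partial>\<mu>) + (1 / k\<^sup>2) * (\<integral>X. (\<Sum>c\<in>C. \<Sum>c'\<in>C. Ic c' d X * Ic c d X) \<partial>\<mu>)"
    using iG2 iS1 iS2 by (simp add: Bochner_Integration.integral_add Bochner_Integration.integral_diff)
  also have "(\<integral>X. (\<Sum>c\<in>C. Gc d X * Ic c d X) \<partial>\<mu>) = (\<Sum>c\<in>C. \<integral>X. Gc d X * Ic c d X \<partial>\<mu>)"
    by (rule Bochner_Integration.integral_sum, rule iGI)
  also have "\<dots> = (\<Sum>c\<in>C. p2)"
    by (rule sum.cong[OF refl], rule E_GI[OF cC(1) d(1) cC(2)])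
  also have "(\<integral>X. (\<Sum>c\<in>C. \<Sum>c'\<in>C. Ic c' d X * Ic c d X) \<partial>\<mu>) = (\<Sum>c\<in>C. \<Sum>c'\<in>C. \<integral>X. Ic c' d X * Ic c d X \<partial>\<mu>)"
    by (subst Bochner_Integration.integral_sum, rule Bochner_Integration.integrable_sum, rule iII, assumption+)
       (rule sum.cong[OF refl], rule Bochner_Integration.integral_sum, rule iII)
  also have "\<dots> = (\<Sum>c\<in>C. \<Sum>c'\<in>C. if c' = c then p1 else p2)"
    by (rule sum.cong[OF refl], rule sum.cong[OF refl], rule EII)
  also have "\<dots> = (\<Sum>c\<in>C. p1 + (k - 1) * p2)"
    by (rule sum.cong[OF refl]) (use C(1) in \<open>simp add: sum_if_eq k_def\<close>)
  also have "(\<integral>X. (Gc d X)\<^sup>2 \<partial>\<mu>) = p2" by (rule E_G2[OF d(1)])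
  finally have "(\<integral>X. (Gc d X - (\<Sum>c\<in>C. Ic c d X) / k)\<^sup>2 \<partial>\<mu>) = p2 - 2 / k * (k * p2) + 1 / k\<^sup>2 * (k * (p1 + (k - 1) * p2))"
    by (simp add: k_def)
  also have "\<dots> = (p1 - p2) / k" using k0 by (simp add: field_simps power2_eq_square)
  finally show ?thesis by (simp add: k_def)
qed

lemma LemmaSplit:
  assumes C: "finite C" "C \<subseteq> Cd" "C \<noteq> {}" and d: "d \<in> Cd" "d \<notin> C"
    and FA: "bm FA" and FAi: "\<And>c. c \<in> C \<Longrightarrow> invc c FA"
  shows "(\<integral>X. (FA X - (\<Sum>c\<in>C. Ic c d X) / real (card C))\<^sup>2 \<partial>\<mu>) = (\<integral>X. (FA X - Gc d X)\<^sup>2 \<partial>\<mu>) + (p1 - p2) / real (card C)"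
proof -
  define k where "k = real (card C)"
  have k0: "k > 0" using C by (simp add: k_def card_gt_0_iff)
  have cC: "\<And>c. c \<in> C \<Longrightarrow> c \<in> Cd" "\<And>c. c \<in> C \<Longrightarrow> c \<noteq> d" using C d by auto
  define H where "H X = FA X - Gc d X" for X
  have bH: "bm H" unfolding H_def by (rule bm_diff[OF FA bm_Gc[OF d(1)]])
  have Hi: "invc c H" if "c \<in> C" for c
    using FAi[OF that] invc_Gc[OF cC(2)[OF that]] unfolding invc_def H_def by simp
  have pw: "(FA X - (\<Sum>c\<in>C. Ic c d X) / k)\<^sup>2 = (H X)\<^sup>2 + 2 * (H X * Gc d X - (1 / k) * (\<Sum>c\<in>C. H X * Ic c d X))
       + (Gc d X - (\<Sum>c\<in>C. Ic c d X) / k)\<^sup>2" for X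
  proof -
    have e1: "(\<Sum>c\<in>C. H X * Ic c d X) = H X * (\<Sum>c\<in>C. Ic c d X)" by (simp add: sum_distrib_left)
    have e2: "(1 / k) * (H X * (\<Sum>c\<in>C. Ic c d X)) = H X * ((\<Sum>c\<in>C. Ic c d X) / k)" by simp
    have gen: "(a - t)\<^sup>2 = (a - g)\<^sup>2 + 2 * ((a - g) * g - (a - g) * t) + (g - t)\<^sup>2" for a g t :: real
      by (simp add: power2_eq_square algebra_simps)
    show ?thesis unfolding e1 e2 unfolding H_def by (rule gen)
  qed
  have iHI: "integrable \<mu> (\<lambda>X. H X * Ic c d X)" if "c \<in> C" for c
    by (rule bm_int, rule bm_mult[OF bH], rule bm_Ic[OF cC(1)[OF that] d(1)])
  have i1: "integrable \<mu> (\<lambda>X. (H X)\<^sup>2)" by (rule bm_int, rule bm_sq[OF bH])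
  have iHG: "integrable \<mu> (\<lambda>X. H X * Gc d X)" by (rule bm_int, rule bm_mult[OF bH bm_Gc[OF d(1)]])
  have iS: "integrable \<mu> (\<lambda>X. \<Sum>c\<in>C. H X * Ic c d X)" by (rule Bochner_Integration.integrable_sum, rule iHI)
  have i3: "integrable \<mu> (\<lambda>X. (Gc d X - (\<Sum>c\<in>C. Ic c d X) / k)\<^sup>2)"
    by (rule bm_int, rule bm_sq, rule bm_diff[OF bm_Gc[OF d(1)]], rule bm_div, rule bm_sum[OF C(1)], rule bm_Ic[OF cC(1) d(1)])
  have i2: "integrable \<mu> (\<lambda>X. 2 * (H X * Gc d X - (1 / k) * (\<Sum>c\<in>C. H X * Ic c d X)))"
    using iHG iS by auto
  have mid: "(\<integral>X. 2 * (H X * Gc d X - (1 / k) * (\<Sum>c\<in>C. H X * Ic c d X)) \<partial>\<mu>) = 0"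
  proof -
    have "(\<integral>X. (\<Sum>c\<in>C. H X * Ic c d X) \<partial>\<mu>) = (\<Sum>c\<in>C. \<integral>X. H X * Ic c d X \<partial>\<mu>)"
      by (rule Bochner_Integration.integral_sum, rule iHI)
    also have "\<dots> = (\<Sum>c\<in>C. \<integral>X. H X * Gc d X \<partial>\<mu>)"
      by (rule sum.cong[OF refl], rule E_HI[OF cC(1) d(1) cC(2) bH Hi])
    also have "\<dots> = k * (\<integral>X. H X * Gc d X \<partial>\<mu>)" by (simp add: k_def)
    finally have e: "(\<integral>X. (\<Sum>c\<in>C. H X * Ic c d X) \<partial>\<mu>) = k * (\<integral>X. H X * Gc d X \<partial>\<mu>)" .
    show ?thesis
      using iHG iS e k0 by (simp add: Bochner_Integration.integral_diff)
  qed
  have "(\<integral>X. (FA X - (\<Sum>c\<in>C. Ic c d X) / k)\<^sup>2 \<partial>\<mu>) = (\<integral>X. (H X)\<^sup>2 + 2 * (H X * Gc d X - (1 / k) * (\<Sum>c\<in>C. H X * Ic c d X))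
       + (Gc d X - (\<Sum>c\<in>C. Ic c d X) / k)\<^sup>2 \<partial>\<mu>)"
    by (simp only: pw)
  also have "\<dots> = (\<integral>X. (H X)\<^sup>2 \<partial>\<mu>) + (\<integral>X. 2 * (H X * Gc d X - (1 / k) * (\<Sum>c\<in>C. H X * Ic c d X)) \<partial>\<mu>)
       + (\<integral>X. (Gc d X - (\<Sum>c\<in>C. Ic c d X) / k)\<^sup>2 \<partial>\<mu>)"
    using i1 i2 i3 by (simp add: Bochner_Integration.integral_add)
  also have "\<dots> = (\<integral>X. (H X)\<^sup>2 \<partial>\<mu>) + (p1 - p2) / k"
    using LemmaV[OF C d] mid by (simp add: k_def)
  finally show ?thesis by (simp add: k_def H_def)
qed

end



context cfg begin

lemma intD_Gd: "integrable D (\<lambda>y. Gd (\<psi> y))" "integrable D (\<lambda>y. (Gd (\<psi> y))\<^sup>2)"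
proof -
  have m: "(\<lambda>y. Gd (\<psi> y)) \<in> borel_measurable D" by (rule measurable_compose[OF \<psi>m Gd_meas])
  show "integrable D (\<lambda>y. Gd (\<psi> y))"
    by (rule DD.integrable_const_bound[where B=1]) (use m Gd_bounds in auto)
  show "integrable D (\<lambda>y. (Gd (\<psi> y))\<^sup>2)"
    by (rule DD.integrable_const_bound[where B=1]) (use m Gd_bounds in \<open>auto simp: abs_square_le_1\<close>)
qed

lemma p_le14: "p1 - p2 \<le> 1/4"
proof -
  have "p1 - p2 = (\<integral>y. Gd (\<psi> y) - (Gd (\<psi> y))\<^sup>2 \<partial>D)"
    unfolding p1_def p2_def using intD_Gd by (simp add: Bochner_Integration.integral_diff)
  also have "\<dots> \<le> (\<integral>y. 1/4 \<partial>D)"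
  proof (rule integral_mono)
    show "integrable D (\<lambda>y. Gd (\<psi> y) - (Gd (\<psi> y))\<^sup>2)" using intD_Gd by auto
    show "integrable D (\<lambda>y. 1/4 :: real)" by simp
    fix y
    have "0 \<le> (Gd (\<psi> y) - 1/2)\<^sup>2" by simp
    then show "Gd (\<psi> y) - (Gd (\<psi> y))\<^sup>2 \<le> 1/4" by (simp add: power2_eq_square algebra_simps)
  qed
  also have "\<dots> = 1/4" by (simp add: DD.prob_space)
  finally show ?thesis .
qed

lemma int_ind_eq: "(\<integral>y. ind (\<psi> y = t) \<partial>D) = measure D {y \<in> space D. \<psi> y = t}"
proof -
  have "(\<integral>y. ind (\<psi> y = t) \<partial>D) = (\<integral>y. indicator {y \<in> space D. \<psi> y = t} y \<partial>D)"
    by (rule Bochner_Integration.integral_cong) (auto simp: ind_def indicator_def)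
  also have "\<dots> = measure D {y \<in> space D. \<psi> y = t}"
    by (simp add: Collect_subset[THEN Int_absorb2])
  finally show ?thesis .
qed

lemma p_atomless:
  assumes at: "\<And>t. measure D {y \<in> space D. \<psi> y = t} = 0"
    and a: "a \<in> Cd" and b: "b \<in> Cd" and c: "c \<in> Cd" and dist: "a \<noteq> b" "a \<noteq> c" "b \<noteq> c"
  shows "p1 - p2 \<le> 1/6"
proof -
  have Eeq: "(\<integral>X. ind (\<psi> (xc X b) = \<psi> (xc X a)) \<partial>\<mu>) = 0"
  proof -
    have Vm: "(\<lambda>X. \<psi> (xc X a)) \<in> borel_measurable \<mu>" by (rule measurable_compose[OF xc_meas[OF a] \<psi>m])
    have Vi: "invc b (\<lambda>X. \<psi> (xc X a))" unfolding invc_def using dist by (simp add: xc_updc)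
    have "(\<integral>X. 1 * ind (\<psi> (xc X b) = \<psi> (xc X a)) \<partial>\<mu>) = (\<integral>X. 1 * (\<integral>y. ind (\<psi> y = \<psi> (xc X a)) \<partial>D) \<partial>\<mu>)"
      by (rule M1[OF b _ _ Vm _ Vi ind_eq_meas, where B=1]) (auto simp: invc_def)
    then show ?thesis by (simp add: int_ind_eq at)
  qed
  have bIba: "bm (Ic b a)" by (rule bm_Ic[OF b a])
  have bIab: "bm (Ic a b)" by (rule bm_Ic[OF a b])
  have ieq: "integrable \<mu> (\<lambda>X. ind (\<psi> (xc X b) = \<psi> (xc X a)))"
  proof -
    have pm: "(\<lambda>X. (\<psi> (xc X b), \<psi> (xc X a))) \<in> measurable \<mu> (borel \<Otimes>\<^sub>M borel)"
      by (rule measurable_Pair[OF measurable_compose[OF xc_meas[OF b] \<psi>m] measurable_compose[OF xc_meas[OF a] \<psi>m]])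
    have "(\<lambda>X. (\<lambda>(s, t). ind (s = t)) (\<psi> (xc X b), \<psi> (xc X a))) \<in> borel_measurable \<mu>"
      by (rule measurable_compose[OF pm ind_eq_meas])
    then have "(\<lambda>X. ind (\<psi> (xc X b) = \<psi> (xc X a))) \<in> borel_measurable \<mu>" by (simp only: case_prod_conv)
    then show ?thesis by (rule integrable_mu[where B=1]) simp
  qed
  have pw1: "Ic b a X + Ic a b X = 1 + ind (\<psi> (xc X b) = \<psi> (xc X a))" for X
    by (auto simp: Ic_def ind_def)
  have "(\<integral>X. Ic b a X + Ic a b X \<partial>\<mu>) = (\<integral>X. 1 + ind (\<psi> (xc X b) = \<psi> (xc X a)) \<partial>\<mu>)"
    by (simp only: pw1)
  then have "p1 + p1 = 1"
    using bm_int[OF bIba] bm_int[OF bIab] ieq Eeq E_I[OF b a dist(1)[symmetric]] E_I[OF a b dist(1)]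
    by (simp add: Bochner_Integration.integral_add P.prob_space)
  then have p1: "p1 = 1/2" by simp
  let ?f = "\<lambda>X. Ic b a X * Ic c a X + Ic a b X * Ic c b X + Ic a c X * Ic b c X"
  have bf: "bm ?f"
    by (intro bm_add bm_mult bm_Ic a b c)
  have "(\<integral>X. 1 \<partial>\<mu>) \<le> (\<integral>X. ?f X \<partial>\<mu>)"
  proof (rule integral_mono)
    show "integrable \<mu> (\<lambda>X. 1::real)" by simp
    show "integrable \<mu> ?f" by (rule bm_int[OF bf])
    fix X
    show "1 \<le> ?f X"
      by (cases "\<psi> (xc X a) \<le> \<psi> (xc X b)"; cases "\<psi> (xc X a) \<le> \<psi> (xc X c)"; cases "\<psi> (xc X b) \<le> \<psi> (xc X c)")
         (auto simp: Ic_def ind_def)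
  qed
  also have "(\<integral>X. ?f X \<partial>\<mu>) = p2 + p2 + p2"
  proof -
    have i: "integrable \<mu> (\<lambda>X. Ic u w X * Ic v w X)" if "u \<in> Cd" "v \<in> Cd" "w \<in> Cd" for u v w
      by (rule bm_int, rule bm_mult, rule bm_Ic[OF that(1,3)], rule bm_Ic[OF that(2,3)])
    have "(\<integral>X. ?f X \<partial>\<mu>) = (\<integral>X. Ic b a X * Ic c a X \<partial>\<mu>) + (\<integral>X. Ic a b X * Ic c b X \<partial>\<mu>) + (\<integral>X. Ic a c X * Ic b c X \<partial>\<mu>)"
      using i[OF b c a] i[OF a c b] i[OF a b c] by (simp add: Bochner_Integration.integral_add)
    also have "\<dots> = p2 + p2 + p2"
      using E_II[OF c b a] E_II[OF c a b] E_II[OF b a c] dist by auto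
    finally show ?thesis .
  qed
  finally have "1 \<le> 3 * p2" by (simp add: P.prob_space)
  then show ?thesis using p1 by simp
qed

end



definition idx :: "nat \<Rightarrow> (nat \<Rightarrow> nat) \<Rightarrow> nat \<Rightarrow> (nat \<times> nat) list" where
  "idx m n i = concat (map (\<lambda>j. map (\<lambda>p. (j, p)) [0..<n j]) (filter (\<lambda>j. j \<noteq> i) [0..<m]))"

lemma others_pool_idx: "others_pool m n i x = map (xc x) (idx m n i)"
  unfolding others_pool_def idx_def agent_data_def
  by (simp add: map_concat comp_def xc_def)

lemma set_idx: "set (idx m n i) = {c. fst c < m \<and> fst c \<noteq> i \<and> snd c < n (fst c)}"
  unfolding idx_def by force

lemma distinct_concat_pairs: "distinct js \<Longrightarrow> distinct (concat (map (\<lambda>j. map (\<lambda>p. (j, p)) [0..<n j]) js))"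
  by (induction js) (auto simp: distinct_map inj_on_def)

lemma distinct_idx: "distinct (idx m n i)"
  unfolding idx_def by (rule distinct_concat_pairs) simp

lemma length_idx: "length (idx m n i) = (\<Sum>j\<in>{..<m} - {i}. n j)"
proof -
  have "length (idx m n i) = sum_list (map n (filter (\<lambda>j. j \<noteq> i) [0..<m]))"
    unfolding idx_def by (simp add: length_concat comp_def)
  also have "\<dots> = (\<Sum>j\<in>set (filter (\<lambda>j. j \<noteq> i) [0..<m]). n j)"
    by (rule sum_list_distinct_conv_sum_set) simp
  also have "set (filter (\<lambda>j. j \<noteq> i) [0..<m]) = {..<m} - {i}" by auto
  finally show ?thesis .
qed



lemma ecdf_eq: "ecdf S t = real (size (filter_mset (\<lambda>s. s \<le> t) S)) / real (size S)"
  unfolding ecdf_def by auto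

lemma size_filter_image_ind:
  "real (size (filter_mset (\<lambda>s. s \<le> v) (image_mset f A))) = sum_mset (image_mset (\<lambda>a. ind (f a \<le> v)) A)"
  by (induction A) (auto simp: ind_def)

definition FAf :: "('a \<Rightarrow> real) \<Rightarrow> 'a list \<Rightarrow> 'a list \<Rightarrow> nat \<Rightarrow> nat set \<Rightarrow> real" where
  "FAf \<psi> xs P t W = (sum_list (map (\<lambda>u. ind (\<psi> u \<le> \<psi> (P ! t))) xs) + (\<Sum>q\<in>W. ind (\<psi> (P ! q) \<le> \<psi> (P ! t))))
      / real (length xs + card W)"

definition FZf :: "('a \<Rightarrow> real) \<Rightarrow> 'a list \<Rightarrow> nat \<Rightarrow> nat set \<Rightarrow> real" where
  "FZf \<psi> P t W = (\<Sum>q\<in>{..<length P} - {t} - W. ind (\<psi> (P ! q) \<le> \<psi> (P ! t)))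
      / real (card ({..<length P} - {t} - W))"

lemma split_loss_eq:
  assumes W: "finite W"
  shows "split_loss K \<phi> xs P t W = (1 / real K) * (\<Sum>k<K. (FAf (\<phi> k) xs P t W - FZf (\<phi> k) P t W)\<^sup>2)"
proof -
  have A: "ecdf (image_mset (\<phi> k) (mset xs + image_mset (\<lambda>p. P ! p) (mset_set W))) (\<phi> k (P ! t)) = FAf (\<phi> k) xs P t W" for k
  proof -
    have "sum_mset (image_mset (\<lambda>a. ind (\<phi> k a \<le> \<phi> k (P ! t))) (mset xs + image_mset (\<lambda>p. P ! p) (mset_set W)))
        = sum_list (map (\<lambda>u. ind (\<phi> k u \<le> \<phi> k (P ! t))) xs) + (\<Sum>q\<in>W. ind (\<phi> k (P ! q) \<le> \<phi> k (P ! t)))"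
      by (simp add: sum_mset_sum_list[symmetric] multiset.map_comp comp_def sum_unfold_sum_mset)
    moreover have "size (mset xs + image_mset (\<lambda>p. P ! p) (mset_set W)) = length xs + card W"
      using W by simp
    ultimately show ?thesis
      unfolding ecdf_eq FAf_def size_filter_image_ind by (simp del: image_mset_union)
  qed
  have Z: "ecdf (image_mset (\<phi> k) (image_mset (\<lambda>p. P ! p) (mset_set ({..<length P} - {t} - W)))) (\<phi> k (P ! t)) = FZf (\<phi> k) P t W" for k
  proof -
    have "sum_mset (image_mset (\<lambda>a. ind (\<phi> k a \<le> \<phi> k (P ! t))) (image_mset (\<lambda>p. P ! p) (mset_set ({..<length P} - {t} - W))))
        = (\<Sum>q\<in>{..<length P} - {t} - W. ind (\<phi> k (P ! q) \<le> \<phi> k (P ! t)))"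
      by (simp add: multiset.map_comp comp_def sum_unfold_sum_mset)
    moreover have "size (image_mset (\<lambda>p. P ! p) (mset_set ({..<length P} - {t} - W))) = card ({..<length P} - {t} - W)"
      by simp
    ultimately show ?thesis
      unfolding ecdf_eq FZf_def size_filter_image_ind by simp
  qed
  show ?thesis
    unfolding split_loss_def Let_def A Z by simp
qed



lemma sum_list_ind_le: "sum_list (map (\<lambda>u. ind (Q u)) xs) \<le> real (length xs)"
  by (induction xs) (auto simp: ind_def)

lemma sum_list_ind_ge: "0 \<le> sum_list (map (\<lambda>u. ind (Q u)) xs)"
  by (induction xs) (auto simp: ind_def)

locale cfg2 = cfg D m n \<psi> for D :: "'a measure" and m n \<psi> +
  fixes M :: "'a measure" and g :: "'a list \<Rightarrow> 'a list" and i :: nat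
  assumes setsD: "sets D = sets M" and gm: "strategy_measurable M g" and i_m: "i < m"
begin

definition "outg x = g (agent_data n x i)"
definition "leng x = length (outg x)"
definition "cnt d x = sum_list (map (\<lambda>u. ind (\<psi> u \<le> \<psi> (xc x d))) (outg x))"
definition "FAc Wc d x = (cnt d x + (\<Sum>c\<in>Wc. Ic c d x)) / real (leng x + card Wc)"

lemma pi_meas: "(\<lambda>x. x i) \<in> measurable \<mu> (PiM {..<n i} (\<lambda>_. M))"
proof -
  have "(\<lambda>x. x i) \<in> measurable \<mu> (PiM {..<n i} (\<lambda>_. D))"
  proof -
    have i': "i \<in> {..<m}" using i_m by simp
    from measurable_component_singleton[OF i', of "\<lambda>j. PiM {..<n j} (\<lambda>_. D)"] show ?thesis
      by (simp add: data_measure_def)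
  qed
  moreover have "sets (PiM {..<n i} (\<lambda>_. D)) = sets (PiM {..<n i} (\<lambda>_. M))"
    by (rule sets_PiM_cong) (auto simp: setsD)
  ultimately show ?thesis using measurable_cong_sets by blast
qed

lemma \<psi>M: "\<psi> \<in> borel_measurable M"
  using \<psi>m measurable_cong_sets[OF setsD refl] by blast

lemma gm1: "(\<lambda>y. length (g (map y [0..<n i]))) \<in> measurable (PiM {..<n i} (\<lambda>_. M)) (count_space UNIV)"
  using gm unfolding strategy_measurable_def by blast

lemma gm2: "(\<lambda>y. g (map y [0..<n i]) ! j) \<in> measurable (restrict_space (PiM {..<n i} (\<lambda>_. M)) {y. j < length (g (map y [0..<n i]))}) M"
  using gm unfolding strategy_measurable_def by blast

lemma leng_meas: "leng \<in> measurable \<mu> (count_space UNIV)"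
proof -
  have "(\<lambda>x. length (g (map (x i) [0..<n i]))) \<in> measurable \<mu> (count_space UNIV)"
    by (rule measurable_compose[OF pi_meas gm1])
  moreover have "leng = (\<lambda>x. length (g (map (x i) [0..<n i])))"
    by (simp add: fun_eq_iff leng_def outg_def agent_data_def)
  ultimately show ?thesis by simp
qed

lemma leng_real_meas: "(\<lambda>x. real (leng x)) \<in> borel_measurable \<mu>"
  by (rule measurable_compose[OF leng_meas]) simp

lemma out_nth_meas: "(\<lambda>x. outg x ! j) \<in> measurable (restrict_space \<mu> {x. j < leng x}) M"
proof -
  have "(\<lambda>x. x i) \<in> measurable (restrict_space \<mu> {x. j < leng x}) (restrict_space (PiM {..<n i} (\<lambda>_. M)) {y. j < length (g (map y [0..<n i]))})"
    by (rule measurable_restrict_space3[OF pi_meas]) (auto simp: leng_def outg_def agent_data_def)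
  from measurable_compose[OF this gm2] show ?thesis
    by (simp add: outg_def agent_data_def)
qed

lemma cnt_meas: assumes d: "d \<in> Cd" shows "cnt d \<in> borel_measurable \<mu>"
proof -
  define tm where "tm j x = (if j < leng x then ind (\<psi> (outg x ! j) \<le> \<psi> (xc x d)) else 0)" for j x
  have tmm: "tm j \<in> borel_measurable \<mu>" for j
  proof -
    have sets: "{x \<in> space \<mu>. j < leng x} \<in> sets \<mu>"
    proof -
      have "leng -` {j<..} \<inter> space \<mu> \<in> sets \<mu>" by (rule measurable_sets[OF leng_meas]) simp
      moreover have "leng -` {j<..} \<inter> space \<mu> = {x \<in> space \<mu>. j < leng x}" by auto
      ultimately show ?thesis by simp
    qed
    have z: "(\<lambda>x. 0::real) \<in> borel_measurable (restrict_space \<mu> {x. \<not> j < leng x})" by simp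
    have pm: "(\<lambda>x. (\<psi> (outg x ! j), \<psi> (xc x d))) \<in> measurable (restrict_space \<mu> {x. j < leng x}) (borel \<Otimes>\<^sub>M borel)"
      by (rule measurable_Pair[OF measurable_compose[OF out_nth_meas \<psi>M] measurable_compose[OF measurable_restrict_space1[OF xc_meas[OF d]] \<psi>m]])
    have "(\<lambda>x. (\<lambda>(s, t). ind (s \<le> t)) (\<psi> (outg x ! j), \<psi> (xc x d))) \<in> borel_measurable (restrict_space \<mu> {x. j < leng x})"
      by (rule measurable_compose[OF pm ind_le_meas])
    then have f: "(\<lambda>x. ind (\<psi> (outg x ! j) \<le> \<psi> (xc x d))) \<in> borel_measurable (restrict_space \<mu> {x. j < leng x})"
      by (simp only: case_prod_conv)
    have "(\<lambda>x. if j < leng x then ind (\<psi> (outg x ! j) \<le> \<psi> (xc x d)) else 0) \<in> borel_measurable \<mu>"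
      using measurable_If_restrict_space_iff[OF sets, of "\<lambda>x. ind (\<psi> (outg x ! j) \<le> \<psi> (xc x d))" "\<lambda>x. 0" borel] f z
      by blast
    then show ?thesis unfolding tm_def .
  qed
  show ?thesis
  proof (rule borel_measurable_LIMSEQ_real[where u="\<lambda>J x. \<Sum>j<J. tm j x"])
    show "(\<lambda>x. \<Sum>j<J. tm j x) \<in> borel_measurable \<mu>" for J
      using tmm by (rule borel_measurable_sum)
    fix x assume "x \<in> space \<mu>"
    show "(\<lambda>J. \<Sum>j<J. tm j x) \<longlonglongrightarrow> cnt d x"
    proof (rule tendsto_eventually, unfold eventually_sequentially, intro exI allI impI)
      fix J assume J: "leng x \<le> J"
      have "(\<Sum>j<J. tm j x) = (\<Sum>j\<in>{..<J} \<inter> {j. j < leng x}. ind (\<psi> (outg x ! j) \<le> \<psi> (xc x d)))"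
        unfolding tm_def by (simp add: sum.inter_restrict)
      also have "{..<J} \<inter> {j. j < leng x} = {0..<leng x}" using J by auto
      also have "(\<Sum>j\<in>{0..<leng x}. ind (\<psi> (outg x ! j) \<le> \<psi> (xc x d))) = cnt d x"
        unfolding cnt_def leng_def by (simp add: sum_list_sum_nth)
      finally show "(\<Sum>j<J. tm j x) = cnt d x" .
    qed
  qed
qed

lemma cnt_bounds: "0 \<le> cnt d x" "cnt d x \<le> real (leng x)"
  unfolding cnt_def leng_def by (rule sum_list_ind_ge, rule sum_list_ind_le)

lemma bm_FAc:
  assumes Wc: "finite Wc" "Wc \<subseteq> Cd" and d: "d \<in> Cd"
  shows "bm (FAc Wc d)"
proof -
  have m: "FAc Wc d \<in> borel_measurable \<mu>"
    unfolding FAc_def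
  proof (intro borel_measurable_divide borel_measurable_add cnt_meas[OF d] borel_measurable_sum)
    show "Ic c d \<in> borel_measurable \<mu>" if "c \<in> Wc" for c
      using bm_Ic[of c d] that Wc d unfolding bm_def by auto
    show "(\<lambda>x. real (leng x + card Wc)) \<in> borel_measurable \<mu>"
      using leng_real_meas by simp
  qed
  have b: "\<bar>FAc Wc d x\<bar> \<le> 1" for x
  proof -
    have s0: "0 \<le> (\<Sum>c\<in>Wc. Ic c d x)" by (rule sum_nonneg) (simp add: Ic_def)
    have s1: "(\<Sum>c\<in>Wc. Ic c d x) \<le> real (card Wc)"
      using sum_bounded_above[of Wc "\<lambda>c. Ic c d x" 1] by (simp add: Ic_def)
    have num0: "0 \<le> cnt d x + (\<Sum>c\<in>Wc. Ic c d x)" using cnt_bounds(1)[of d x] s0 by simp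
    have num1: "cnt d x + (\<Sum>c\<in>Wc. Ic c d x) \<le> real (leng x + card Wc)" using cnt_bounds(2)[of d x] s1 by simp
    show ?thesis
    proof (cases "leng x + card Wc = 0")
      case True then show ?thesis by (simp add: FAc_def)
    next
      case False
      then have pos: "0 < real (leng x + card Wc)" by (metis of_nat_0_less_iff gr0I)
      have "FAc Wc d x \<le> 1" unfolding FAc_def using num1 pos by (simp add: divide_le_eq_1)
      moreover have "0 \<le> FAc Wc d x" unfolding FAc_def using num0 pos by simp
      ultimately show ?thesis by simp
    qed
  qed
  show ?thesis unfolding bm_def using m b by blast
qed

lemma invc_FAc:
  assumes c: "fst c \<noteq> i" "c \<notin> Wc" "c \<noteq> d"
  shows "invc c (FAc Wc d)"
proof -
  have ag: "agent_data n (updc c X y) i = agent_data n X i" for X y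
    using c(1) by (simp add: agent_data_def updc_def)
  have "FAc Wc d (updc c X y) = FAc Wc d X" for X y
  proof -
    have "outg (updc c X y) = outg X" by (simp add: outg_def ag)
    moreover have "xc (updc c X y) d = xc X d" using c by (simp add: xc_updc)
    moreover have "(\<Sum>c'\<in>Wc. Ic c' d (updc c X y)) = (\<Sum>c'\<in>Wc. Ic c' d X)"
      by (rule sum.cong[OF refl]) (use c in \<open>auto simp: Ic_def xc_updc\<close>)
    ultimately show ?thesis by (simp add: FAc_def cnt_def leng_def)
  qed
  then show ?thesis by (simp add: invc_def)
qed

end



context cfg2 begin

abbreviation "ix \<equiv> idx m n i"

lemma ix_Cd: "c \<in> set ix \<Longrightarrow> c \<in> Cd"
  using set_idx[of m n i] by (auto simp: Cd_def)

lemma ix_fst: "c \<in> set ix \<Longrightarrow> fst c \<noteq> i"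
  using set_idx[of m n i] by auto

lemma ix_nth_Cd: "q < length ix \<Longrightarrow> ix ! q \<in> Cd"
  using ix_Cd by simp

lemma ix_nth_fst: "q < length ix \<Longrightarrow> fst (ix ! q) \<noteq> i"
  using ix_fst by simp

lemma ix_inj: "inj_on (nth ix) A" if "A \<subseteq> {..<length ix}"
  using inj_on_nth[OF distinct_idx, of A] that by auto

lemma P_nth: "q < length ix \<Longrightarrow> others_pool m n i x ! q = xc x (ix ! q)"
  by (simp add: others_pool_idx)

lemma length_P: "length (others_pool m n i x) = length ix"
  by (simp add: others_pool_idx)

lemma FA_rel:
  assumes t: "t < length ix" and W: "W \<subseteq> {..<length ix} - {t}"
  shows "FAf \<psi> (outg x) (others_pool m n i x) t W = FAc (nth ix ` W) (ix ! t) x"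
proof -
  have fW: "finite W" using W finite_subset by blast
  have inj: "inj_on (nth ix) W" using W by (intro ix_inj) auto
  have "(\<Sum>q\<in>W. ind (\<psi> (others_pool m n i x ! q) \<le> \<psi> (others_pool m n i x ! t))) = (\<Sum>q\<in>W. Ic (ix ! q) (ix ! t) x)"
    by (rule sum.cong[OF refl]) (use W t in \<open>auto simp: P_nth Ic_def\<close>)
  also have "\<dots> = (\<Sum>c\<in>nth ix ` W. Ic c (ix ! t) x)"
    by (rule sum.reindex[OF inj, symmetric, unfolded comp_def])
  finally have s: "(\<Sum>q\<in>W. ind (\<psi> (others_pool m n i x ! q) \<le> \<psi> (others_pool m n i x ! t))) = (\<Sum>c\<in>nth ix ` W. Ic c (ix ! t) x)" .
  have c: "card (nth ix ` W) = card W" using card_image[OF inj] .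
  show ?thesis
    unfolding FAf_def FAc_def s c cnt_def leng_def using t by (simp add: P_nth)
qed

lemma FZ_rel:
  assumes t: "t < length ix"
  shows "FZf \<psi> (others_pool m n i x) t W =
    (\<Sum>c\<in>nth ix ` ({..<length ix} - {t} - W). Ic c (ix ! t) x) / real (card (nth ix ` ({..<length ix} - {t} - W)))"
proof -
  let ?Z = "{..<length ix} - {t} - W"
  have inj: "inj_on (nth ix) ?Z" by (intro ix_inj) auto
  have s1: "(\<Sum>q\<in>?Z. ind (\<psi> (others_pool m n i x ! q) \<le> \<psi> (others_pool m n i x ! t))) = (\<Sum>q\<in>?Z. Ic (ix ! q) (ix ! t) x)"
    by (rule sum.cong[OF refl]) (use t in \<open>auto simp: P_nth Ic_def\<close>)
  have s2: "(\<Sum>q\<in>?Z. Ic (ix ! q) (ix ! t) x) = (\<Sum>c\<in>nth ix ` ?Z. Ic c (ix ! t) x)"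
    by (rule sum.reindex[OF inj, symmetric, unfolded comp_def])
  show ?thesis
    by (simp only: FZf_def length_P card_image[OF inj] s1 s2)
qed

lemma per_split:
  assumes t: "t < length ix" and W: "W \<subseteq> {..<length ix} - {t}" and Zne: "card W < length ix - 1"
  shows "bm (\<lambda>x. (FAf \<psi> (outg x) (others_pool m n i x) t W - FZf \<psi> (others_pool m n i x) t W)\<^sup>2)"
    and "(\<integral>x. (FAf \<psi> (outg x) (others_pool m n i x) t W - FZf \<psi> (others_pool m n i x) t W)\<^sup>2 \<partial>\<mu>)
         = (\<integral>x. (FAc (nth ix ` W) (ix ! t) x - Gc (ix ! t) x)\<^sup>2 \<partial>\<mu>) + (p1 - p2) / real (length ix - 1 - card W)"
proof -
  let ?Z = "{..<length ix} - {t} - W"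
  let ?C = "nth ix ` ?Z"
  let ?d = "ix ! t"
  let ?Wc = "nth ix ` W"
  have fW: "finite W" using W finite_subset by blast
  have injZ: "inj_on (nth ix) ?Z" by (intro ix_inj) auto
  have cardZ: "card ?Z = length ix - 1 - card W"
  proof -
    have "card ?Z = card ({..<length ix} - {t}) - card W"
      using W fW by (subst card_Diff_subset) auto
    also have "card ({..<length ix} - {t}) = length ix - 1" using t by simp
    finally show ?thesis .
  qed
  have cardC: "card ?C = length ix - 1 - card W" using card_image[OF injZ] cardZ by simp
  have C1: "finite ?C" by simp
  have C2: "?C \<subseteq> Cd" using ix_nth_Cd by auto
  have C3: "?C \<noteq> {}" using cardC Zne by (metis card.empty less_numeral_extra(3) zero_less_diff)
  have d1: "?d \<in> Cd" using ix_Cd t by simp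
  have injall: "inj_on (nth ix) {..<length ix}" by (intro ix_inj) auto
  have d2: "?d \<notin> ?C"
  proof
    assume "?d \<in> ?C"
    then obtain q where q0: "ix ! t = ix ! q" "q \<in> ?Z" by (rule imageE)
    have q: "q \<in> ?Z" "ix ! q = ix ! t" using q0 by auto
    have "q = t" by (rule inj_onD[OF injall q(2)]) (use q t in auto)
    then show False using q by auto
  qed
  have Wc1: "finite ?Wc" using fW by simp
  have Wc2: "?Wc \<subseteq> Cd" using W ix_nth_Cd by auto
  have bFA: "bm (FAc ?Wc ?d)" by (rule bm_FAc[OF Wc1 Wc2 d1])
  have FAi: "invc c (FAc ?Wc ?d)" if "c \<in> ?C" for c
  proof (rule invc_FAc)
    from that obtain q where q: "c = ix ! q" "q \<in> ?Z" by (rule imageE)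
    show "fst c \<noteq> i" using q ix_nth_fst by auto
    show "c \<notin> ?Wc"
    proof
      assume "c \<in> ?Wc"
      then obtain w where w: "c = ix ! w" "w \<in> W" by (rule imageE)
      have e: "ix ! w = ix ! q" using w q by simp
      have "w = q" by (rule inj_onD[OF injall e]) (use w q W in auto)
      then show False using q w by auto
    qed
    show "c \<noteq> ?d" using d2 that by metis
  qed
  have eqfun: "(\<lambda>x. (FAf \<psi> (outg x) (others_pool m n i x) t W - FZf \<psi> (others_pool m n i x) t W)\<^sup>2)
      = (\<lambda>x. (FAc ?Wc ?d x - (\<Sum>c\<in>?C. Ic c ?d x) / real (card ?C))\<^sup>2)"
    by (simp add: FA_rel[OF t W] FZ_rel[OF t])
  show "bm (\<lambda>x. (FAf \<psi> (outg x) (others_pool m n i x) t W - FZf \<psi> (others_pool m n i x) t W)\<^sup>2)"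
    unfolding eqfun
    by (intro bm_sq bm_diff bFA bm_div bm_sum C1) (use C2 d1 bm_Ic in blast)
  show "(\<integral>x. (FAf \<psi> (outg x) (others_pool m n i x) t W - FZf \<psi> (others_pool m n i x) t W)\<^sup>2 \<partial>\<mu>)
         = (\<integral>x. (FAc ?Wc ?d x - Gc ?d x)\<^sup>2 \<partial>\<mu>) + (p1 - p2) / real (length ix - 1 - card W)"
  proof -
    have L: "(\<integral>x. (FAc ?Wc ?d x - (\<Sum>c\<in>?C. Ic c ?d x) / real (card ?C))\<^sup>2 \<partial>\<mu>)
        = (\<integral>x. (FAc ?Wc ?d x - Gc ?d x)\<^sup>2 \<partial>\<mu>) + (p1 - p2) / real (card ?C)"
      by (rule LemmaSplit[OF C1 C2 C3 d1 d2 bFA FAi])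
    show ?thesis using L by (simp only: eqfun cardC)
  qed
qed

lemma per_split_truthful:
  assumes gid: "g = id" and ni: "n i \<ge> 1"
    and t: "t < length ix" and W: "W \<subseteq> {..<length ix} - {t}"
  shows "(\<integral>x. (FAc (nth ix ` W) (ix ! t) x - Gc (ix ! t) x)\<^sup>2 \<partial>\<mu>) = (p1 - p2) / real (n i + card W)"
proof -
  let ?d = "ix ! t"
  let ?Wc = "nth ix ` W"
  let ?A = "Pair i ` {..<n i}"
  let ?C = "?A \<union> ?Wc"
  have fW: "finite W" using W finite_subset by blast
  have injW: "inj_on (nth ix) W" using W by (intro ix_inj) auto
  have dis: "?A \<inter> ?Wc = {}"
  proof (rule equals0I)
    fix c assume "c \<in> ?A \<inter> ?Wc"
    then have "c \<in> ?A" by (rule IntD1)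
    then have c1: "fst c = i" by auto
    from \<open>c \<in> ?A \<inter> ?Wc\<close> have "c \<in> ?Wc" by (rule IntD2)
    then obtain w where cw: "c = ix ! w" "w \<in> W" by (rule imageE)
    have "w < length ix" using W cw(2) by auto
    then have "fst (ix ! w) \<noteq> i" by (rule ix_nth_fst)
    then show False using c1 cw(1) by simp
  qed
  have cA: "card ?A = n i" by (simp add: card_image inj_on_def)
  have cW: "card ?Wc = card W" by (rule card_image[OF injW])
  have fA: "finite ?A" by simp
  have fWc: "finite ?Wc" using fW by simp
  have cardC: "card ?C = n i + card W"
    using card_Un_disjoint[OF fA fWc dis] cA cW by simp
  have C1: "finite ?C" using fW by simp
  have C2a: "?A \<subseteq> Cd" using i_m by (auto simp: Cd_def)
  have C2b: "?Wc \<subseteq> Cd" using W ix_nth_Cd by auto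
  have C2: "?C \<subseteq> Cd" using C2a C2b by (rule Un_least)
  have "(i, 0) \<in> ?A" using ni by auto
  then have C3: "?C \<noteq> {}" by blast
  have d1: "?d \<in> Cd" using ix_Cd t by simp
  have injall: "inj_on (nth ix) {..<length ix}" by (intro ix_inj) auto
  have d2: "?d \<notin> ?C"
  proof
    assume "?d \<in> ?C"
    moreover have "?d \<notin> ?A"
    proof
      assume "?d \<in> ?A"
      then have "fst ?d = i" by auto
      then show False using ix_nth_fst[OF t] by simp
    qed
    ultimately have "?d \<in> ?Wc" by blast
    then obtain w where w0: "ix ! t = ix ! w" "w \<in> W" by (rule imageE)
    have w: "w \<in> W" "ix ! w = ix ! t" using w0 by auto
    have "w = t" by (rule inj_onD[OF injall w(2)]) (use t W w in auto)
    then show False using w W by auto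
  qed
  have FAeq: "FAc ?Wc ?d x = (\<Sum>c\<in>?C. Ic c ?d x) / real (card ?C)" for x
  proof -
    have "cnt ?d x = (\<Sum>p<n i. Ic (i, p) ?d x)"
      unfolding cnt_def outg_def agent_data_def Ic_def unfolding gid
      by (simp add: sum_list_sum_nth xc_def atLeast0LessThan)
    also have "\<dots> = (\<Sum>c\<in>?A. Ic c ?d x)" by (simp add: sum.reindex inj_on_def)
    finally have "cnt ?d x + (\<Sum>c\<in>?Wc. Ic c ?d x) = (\<Sum>c\<in>?C. Ic c ?d x)"
      using sum.union_disjoint[OF fA fWc dis, of "\<lambda>c. Ic c ?d x"] by simp
    moreover have "leng x = n i" unfolding leng_def outg_def agent_data_def unfolding gid by simp
    ultimately show ?thesis unfolding FAc_def cardC card_image[OF injW] by simp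
  qed
  have "(\<integral>x. (FAc ?Wc ?d x - Gc ?d x)\<^sup>2 \<partial>\<mu>) = (\<integral>x. (Gc ?d x - (\<Sum>c\<in>?C. Ic c ?d x) / real (card ?C))\<^sup>2 \<partial>\<mu>)"
    by (rule Bochner_Integration.integral_cong[OF refl]) (metis FAeq power2_commute)
  also have "\<dots> = (p1 - p2) / real (card ?C)" by (rule LemmaV[OF C1 C2 C3 d1 d2])
  finally show ?thesis unfolding cardC .
qed

end



lemma measurable_PiM_prob_algebra:
  assumes F: "\<And>i. i \<in> I \<Longrightarrow> F i \<in> measurable L (prob_algebra (N i))"
  shows "(\<lambda>a. PiM I (\<lambda>i. F i a)) \<in> measurable L (prob_algebra (PiM I N))"
proof (rule measurable_prob_algebra_generated[OF sets_PiM Int_stable_prod_algebra prod_algebra_sets_into_space])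
  fix a assume a: "a \<in> space L"
  have Fa: "i \<in> I \<Longrightarrow> F i a \<in> space (prob_algebra (N i))" for i
    using measurable_space[OF F a] .
  then have Fp: "i \<in> I \<Longrightarrow> prob_space (F i a)" and Fs: "i \<in> I \<Longrightarrow> sets (F i a) = sets (N i)" for i
    by (auto simp: space_prob_algebra)
  show "prob_space (PiM I (\<lambda>i. F i a))" by (rule prob_space_PiM) (rule Fp)
  show "sets (PiM I (\<lambda>i. F i a)) = sets (PiM I N)" by (rule sets_PiM_cong) (auto simp: Fs)
next
  fix A assume A: "A \<in> prod_algebra I N"
  then obtain J E where AE: "A = prod_emb I N J (PiE J E)" "finite J" "J \<subseteq> I" "\<And>i. i \<in> J \<Longrightarrow> E i \<in> sets (N i)"
    by (rule prod_algebraE) blast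
  have eq: "emeasure (PiM I (\<lambda>i. F i a)) A = (\<Prod>i\<in>J. emeasure (F i a) (E i))" if a: "a \<in> space L" for a
  proof -
    have Fa: "i \<in> I \<Longrightarrow> F i a \<in> space (prob_algebra (N i))" for i
      using measurable_space[OF F a] .
    then have Fp: "i \<in> I \<Longrightarrow> prob_space (F i a)" and Fs: "i \<in> I \<Longrightarrow> sets (F i a) = sets (N i)" for i
      by (auto simp: space_prob_algebra)
    have Fsp: "i \<in> I \<Longrightarrow> space (F i a) = space (N i)" for i using Fs by (rule sets_eq_imp_space_eq)
    have "A = prod_emb I (\<lambda>i. F i a) J (PiE J E)"
      unfolding AE(1) prod_emb_def using Fsp by (auto simp: PiE_def Pi_def)
    moreover have "emeasure (PiM I (\<lambda>i. F i a)) (prod_emb I (\<lambda>i. F i a) J (PiE J E)) = (\<Prod>i\<in>J. emeasure (F i a) (E i))"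
    proof (rule emeasure_PiM_emb)
      show "\<And>i. i \<in> I \<Longrightarrow> prob_space (F i a)" by (rule Fp)
      show "J \<subseteq> I" "finite J" using AE by auto
      show "\<And>i. i \<in> J \<Longrightarrow> E i \<in> sets (F i a)" using AE(3,4) Fs by auto
    qed
    ultimately show ?thesis by simp
  qed
  have "(\<lambda>a. \<Prod>i\<in>J. emeasure (F i a) (E i)) \<in> borel_measurable L"
  proof (rule borel_measurable_prod_ennreal)
    fix i assume i: "i \<in> J"
    have "(\<lambda>M. emeasure M (E i)) \<in> borel_measurable (subprob_algebra (N i))"
      by (rule measurable_emeasure_subprob_algebra) (rule AE(4)[OF i])
    then show "(\<lambda>a. emeasure (F i a) (E i)) \<in> borel_measurable L"
      using measurable_compose[OF measurable_prob_algebraD[OF F]] AE(3) i by blast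
  qed
  then show "(\<lambda>a. emeasure (PiM I (\<lambda>i. F i a)) A) \<in> borel_measurable L"
    by (rule measurable_cong[THEN iffD2, rotated]) (simp add: eq)
qed

lemma measurable_data_measure:
  "(\<lambda>D. data_measure m n D) \<in> measurable (prob_algebra M) (prob_algebra (data_measure m n M))"
  unfolding data_measure_def
proof (rule measurable_PiM_prob_algebra)
  fix j assume "j \<in> {..<m}"
  show "(\<lambda>D. PiM {..<n j} (\<lambda>_. D)) \<in> measurable (prob_algebra M) (prob_algebra (PiM {..<n j} (\<lambda>_. M)))"
    using measurable_PiM_prob_algebra[of "{..<n j}" "\<lambda>_ D. D" "prob_algebra M" "\<lambda>_. M"] by simp
qed



lemma strategy_measurable_id: "strategy_measurable M id"
  unfolding strategy_measurable_def
proof (intro allI conjI)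
  fix l j
  show "(\<lambda>x. length (id (map x [0..<l]))) \<in> measurable (PiM {..<l} (\<lambda>_. M)) (count_space UNIV)"
    by simp
  show "(\<lambda>x. id (map x [0..<l]) ! j) \<in> measurable (restrict_space (PiM {..<l} (\<lambda>_. M)) {x. j < length (id (map x [0..<l]))}) M"
  proof (cases "j < l")
    case True
    have "(\<lambda>x. x j) \<in> measurable (PiM {..<l} (\<lambda>_. M)) M"
      using measurable_component_singleton[of j "{..<l}" "\<lambda>_. M"] True by simp
    then have "(\<lambda>x. x j) \<in> measurable (restrict_space (PiM {..<l} (\<lambda>_. M)) {x. j < length (id (map x [0..<l]))}) M"
      by (rule measurable_restrict_space1)
    then show ?thesis
      by (rule measurable_cong[THEN iffD1, rotated]) (use True in simp)
  next
    case False
    then have e: "{x. j < length (id (map x [0..<l]))} = {}" by simp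
    have "space (restrict_space (PiM {..<l} (\<lambda>_. M)) {}) = {}" by (simp add: space_restrict_space)
    then have "(\<lambda>x. id (map x [0..<l]) ! j) \<in> measurable (restrict_space (PiM {..<l} (\<lambda>_. M)) {}) M"
      unfolding measurable_def by (auto simp: sets_restrict_space)
    then show ?thesis unfolding e .
  qed
qed

lemma per_term:
  fixes D M :: "'a measure" and \<psi> :: "'a \<Rightarrow> real"
  assumes probD: "prob_space D" and setsD: "sets D = sets M" and \<psi>M: "\<psi> \<in> borel_measurable M"
    and gm: "strategy_measurable M g" and i_m: "i < m" and ni: "n i \<ge> 1"
    and t: "t < length (idx m n i)" and W: "W \<subseteq> {..<length (idx m n i)} - {t}"
    and Zne: "card W < length (idx m n i) - 1"
    and \<beta>: "cfg.p1 D \<psi> - cfg.p2 D \<psi> \<le> \<beta>"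
  shows "integrable (data_measure m n D) (\<lambda>x. (FAf \<psi> (g (agent_data n x i)) (others_pool m n i x) t W - FZf \<psi> (others_pool m n i x) t W)\<^sup>2)"
    and "integrable (data_measure m n D) (\<lambda>x. (FAf \<psi> (id (agent_data n x i)) (others_pool m n i x) t W - FZf \<psi> (others_pool m n i x) t W)\<^sup>2)"
    and "(\<integral>x. (FAf \<psi> (id (agent_data n x i)) (others_pool m n i x) t W - FZf \<psi> (others_pool m n i x) t W)\<^sup>2 \<partial>data_measure m n D)
         \<le> (\<integral>x. (FAf \<psi> (g (agent_data n x i)) (others_pool m n i x) t W - FZf \<psi> (others_pool m n i x) t W)\<^sup>2 \<partial>data_measure m n D)
           + \<beta> / real (n i + card W)"
proof -
  have \<psi>D: "\<psi> \<in> borel_measurable D" using \<psi>M measurable_cong_sets[OF setsD refl] by blast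
  interpret A: cfg2 D m n \<psi> M g i by (rule cfg2.intro[OF cfg.intro[OF probD \<psi>D] cfg2_axioms.intro[OF setsD gm i_m]])
  interpret B: cfg2 D m n \<psi> M id i by (rule cfg2.intro[OF cfg.intro[OF probD \<psi>D] cfg2_axioms.intro[OF setsD strategy_measurable_id i_m]])
  show "integrable (data_measure m n D) (\<lambda>x. (FAf \<psi> (g (agent_data n x i)) (others_pool m n i x) t W - FZf \<psi> (others_pool m n i x) t W)\<^sup>2)"
    using A.bm_int[OF A.per_split(1)[OF t W Zne]] by (simp add: A.outg_def)
  show "integrable (data_measure m n D) (\<lambda>x. (FAf \<psi> (id (agent_data n x i)) (others_pool m n i x) t W - FZf \<psi> (others_pool m n i x) t W)\<^sup>2)"
    using A.bm_int[OF B.per_split(1)[OF t W Zne]] by (simp add: B.outg_def)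
  have Ag: "(\<integral>x. (FAf \<psi> (g (agent_data n x i)) (others_pool m n i x) t W - FZf \<psi> (others_pool m n i x) t W)\<^sup>2 \<partial>data_measure m n D)
      \<ge> (A.p1 - A.p2) / real (length (idx m n i) - 1 - card W)"
  proof -
    have "0 \<le> (\<integral>x. (A.FAc (nth (idx m n i) ` W) (idx m n i ! t) x - A.Gc (idx m n i ! t) x)\<^sup>2 \<partial>data_measure m n D)"
      by (rule integral_nonneg_AE) simp
    then show ?thesis using A.per_split(2)[OF t W Zne] by (simp add: A.outg_def)
  qed
  have Bid: "(\<integral>x. (FAf \<psi> (id (agent_data n x i)) (others_pool m n i x) t W - FZf \<psi> (others_pool m n i x) t W)\<^sup>2 \<partial>data_measure m n D)
      = (A.p1 - A.p2) / real (n i + card W) + (A.p1 - A.p2) / real (length (idx m n i) - 1 - card W)"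
    using B.per_split(2)[OF t W Zne] B.per_split_truthful[OF refl ni t W] by (simp add: B.outg_def)
  have "(A.p1 - A.p2) / real (n i + card W) \<le> \<beta> / real (n i + card W)"
    using \<beta> by (intro divide_right_mono) auto
  then show "(\<integral>x. (FAf \<psi> (id (agent_data n x i)) (others_pool m n i x) t W - FZf \<psi> (others_pool m n i x) t W)\<^sup>2 \<partial>data_measure m n D)
         \<le> (\<integral>x. (FAf \<psi> (g (agent_data n x i)) (others_pool m n i x) t W - FZf \<psi> (others_pool m n i x) t W)\<^sup>2 \<partial>data_measure m n D)
           + \<beta> / real (n i + card W)"
    using Ag Bid by simp
qed



lemma splits_props:
  assumes "(t, W) \<in> splits N w"
  shows "t < N" "W \<subseteq> {..<N} - {t}" "card W = w" "finite W"
  using assms unfolding splits_def by (auto intro: finite_subset)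

lemma finite_splits: "finite (splits N w)"
proof (rule finite_subset)
  show "splits N w \<subseteq> {..<N} \<times> Pow {..<N}" unfolding splits_def by auto
qed simp

lemma card_splits_pos:
  assumes "w < N"
  shows "card (splits N w) > 0"
proof -
  have "(0, {1..w}) \<in> splits N w" using assms unfolding splits_def by auto
  then show ?thesis using finite_splits by (auto simp: card_gt_0_iff)
qed

definition Tk :: "nat \<Rightarrow> (nat \<Rightarrow> 'a \<Rightarrow> real) \<Rightarrow> nat \<Rightarrow> (nat \<Rightarrow> nat) \<Rightarrow> ('a list \<Rightarrow> 'a list) \<Rightarrow> nat \<Rightarrow> nat \<Rightarrow> nat set \<Rightarrow> (nat \<Rightarrow> nat \<Rightarrow> 'a) \<Rightarrow> real" where
  "Tk m \<phi> i n g k t W x = (FAf (\<phi> k) (g (agent_data n x i)) (others_pool m n i x) t W - FZf (\<phi> k) (others_pool m n i x) t W)\<^sup>2"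

lemma mech_loss_expand:
  "mech_loss K \<phi> s (g (agent_data n x i)) (others_pool m n i x) =
     (\<Sum>(t, W)\<in>splits (length (idx m n i)) (s (length (idx m n i))). (1 / real K) * (\<Sum>k<K. Tk m \<phi> i n g k t W x))
     / real (card (splits (length (idx m n i)) (s (length (idx m n i)))))"
proof -
  have lp: "length (others_pool m n i x) = length (idx m n i)" by (simp add: others_pool_idx)
  have "(\<Sum>(t, W)\<in>splits (length (idx m n i)) (s (length (idx m n i))). split_loss K \<phi> (g (agent_data n x i)) (others_pool m n i x) t W)
      = (\<Sum>(t, W)\<in>splits (length (idx m n i)) (s (length (idx m n i))). (1 / real K) * (\<Sum>k<K. Tk m \<phi> i n g k t W x))"
    by (rule sum.cong[OF refl]) (auto simp: split_loss_eq splits_props(4) Tk_def)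
  then show ?thesis unfolding mech_loss_def Let_def lp by simp
qed

lemma EL_expand:
  assumes int: "\<And>t W k. (t, W) \<in> splits (length (idx m n i)) (s (length (idx m n i))) \<Longrightarrow> k < K \<Longrightarrow>
      integrable (data_measure m n D) (Tk m \<phi> i n g k t W)"
  shows "expected_loss m n K \<phi> s i D g =
     (\<Sum>(t, W)\<in>splits (length (idx m n i)) (s (length (idx m n i))). (1 / real K) * (\<Sum>k<K. \<integral>x. Tk m \<phi> i n g k t W x \<partial>data_measure m n D))
     / real (card (splits (length (idx m n i)) (s (length (idx m n i)))))"
proof -
  let ?S = "splits (length (idx m n i)) (s (length (idx m n i)))"
  let ?\<mu> = "data_measure m n D"
  have "expected_loss m n K \<phi> s i D g = (\<integral>x. (\<Sum>(t, W)\<in>?S. (1 / real K) * (\<Sum>k<K. Tk m \<phi> i n g k t W x)) / real (card ?S) \<partial>?\<mu>)"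
    unfolding expected_loss_def mech_loss_expand ..
  also have "\<dots> = (\<integral>x. (\<Sum>(t, W)\<in>?S. (1 / real K) * (\<Sum>k<K. Tk m \<phi> i n g k t W x)) \<partial>?\<mu>) / real (card ?S)"
    by (rule integral_divide_zero)
  also have "(\<integral>x. (\<Sum>(t, W)\<in>?S. (1 / real K) * (\<Sum>k<K. Tk m \<phi> i n g k t W x)) \<partial>?\<mu>)
      = (\<Sum>p\<in>?S. \<integral>x. (case p of (t, W) \<Rightarrow> (1 / real K) * (\<Sum>k<K. Tk m \<phi> i n g k t W x)) \<partial>?\<mu>)"
  proof (rule Bochner_Integration.integral_sum)
    fix p assume p: "p \<in> ?S"
    obtain t W where pw: "p = (t, W)" by (cases p)
    have "integrable ?\<mu> (\<lambda>x. \<Sum>k<K. Tk m \<phi> i n g k t W x)"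
      by (rule Bochner_Integration.integrable_sum) (use int p pw in auto)
    then have "integrable ?\<mu> (\<lambda>x. 1 / real K * (\<Sum>k<K. Tk m \<phi> i n g k t W x))"
      by (rule integrable_mult_right)
    then show "integrable ?\<mu> (\<lambda>x. case p of (t, W) \<Rightarrow> 1 / real K * (\<Sum>k<K. Tk m \<phi> i n g k t W x))"
      unfolding pw by (simp only: case_prod_conv)
  qed
  also have "\<dots> = (\<Sum>(t, W)\<in>?S. (1 / real K) * (\<Sum>k<K. \<integral>x. Tk m \<phi> i n g k t W x \<partial>?\<mu>))"
  proof (rule sum.cong[OF refl])
    fix p assume p: "p \<in> ?S"
    obtain t W where pw: "p = (t, W)" by (cases p)
    have "(\<integral>x. (\<Sum>k<K. Tk m \<phi> i n g k t W x) \<partial>?\<mu>) = (\<Sum>k<K. \<integral>x. Tk m \<phi> i n g k t W x \<partial>?\<mu>)"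
      by (rule Bochner_Integration.integral_sum) (use int p pw in auto)
    then show "(\<integral>x. (case p of (t, W) \<Rightarrow> 1 / real K * (\<Sum>k<K. Tk m \<phi> i n g k t W x)) \<partial>?\<mu>) =
        (case p of (t, W) \<Rightarrow> 1 / real K * (\<Sum>k<K. \<integral>x. Tk m \<phi> i n g k t W x \<partial>?\<mu>))"
      unfolding pw by simp
  qed
  finally show ?thesis .
qed

lemma EL_compare:
  fixes D M :: "'a measure"
  assumes probD: "prob_space D" and setsD: "sets D = sets M" and \<phi>m: "\<forall>k<K. \<phi> k \<in> borel_measurable M"
    and gm: "strategy_measurable M g" and i_m: "i < m" and ni: "n i \<ge> 1" and K1: "K \<ge> 1"
    and sN: "s (length (idx m n i)) < length (idx m n i) - 1"
    and \<beta>: "\<forall>k<K. cfg.p1 D (\<phi> k) - cfg.p2 D (\<phi> k) \<le> \<beta>"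
  shows "expected_loss m n K \<phi> s i D id \<le> expected_loss m n K \<phi> s i D g + \<beta> / real (n i + s (length (idx m n i)))"
proof -
  let ?N = "length (idx m n i)"
  let ?S = "splits ?N (s ?N)"
  let ?\<mu> = "data_measure m n D"
  let ?a = "real (n i + s ?N)"
  have PT: "integrable ?\<mu> (Tk m \<phi> i n g k t W) \<and> integrable ?\<mu> (Tk m \<phi> i n id k t W) \<and>
      (\<integral>x. Tk m \<phi> i n id k t W x \<partial>?\<mu>) \<le> (\<integral>x. Tk m \<phi> i n g k t W x \<partial>?\<mu>) + \<beta> / ?a"
    if tW: "(t, W) \<in> ?S" and k: "k < K" for t W k
  proof -
    note sp = splits_props[OF tW]
    have Zne: "card W < ?N - 1" using sp(3) sN by simp
    note pt = per_term[OF probD setsD _ gm i_m ni sp(1) sp(2) Zne, of "\<phi> k" \<beta>]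
    have \<phi>k: "\<phi> k \<in> borel_measurable M" using \<phi>m k by auto
    have \<beta>k: "cfg.p1 D (\<phi> k) - cfg.p2 D (\<phi> k) \<le> \<beta>" using \<beta> k by auto
    show ?thesis using pt[OF \<phi>k \<beta>k] sp(3) unfolding Tk_def by simp
  qed
  have eg: "expected_loss m n K \<phi> s i D g =
     (\<Sum>(t, W)\<in>?S. (1 / real K) * (\<Sum>k<K. \<integral>x. Tk m \<phi> i n g k t W x \<partial>?\<mu>)) / real (card ?S)"
    by (rule EL_expand) (use PT in blast)
  have eid: "expected_loss m n K \<phi> s i D id =
     (\<Sum>(t, W)\<in>?S. (1 / real K) * (\<Sum>k<K. \<integral>x. Tk m \<phi> i n id k t W x \<partial>?\<mu>)) / real (card ?S)"
    by (rule EL_expand) (use PT in blast)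
  have cS: "real (card ?S) > 0" using card_splits_pos[of "s ?N" ?N] sN by simp
  have "(\<Sum>(t, W)\<in>?S. (1 / real K) * (\<Sum>k<K. \<integral>x. Tk m \<phi> i n id k t W x \<partial>?\<mu>))
      \<le> (\<Sum>(t, W)\<in>?S. (1 / real K) * (\<Sum>k<K. \<integral>x. Tk m \<phi> i n g k t W x \<partial>?\<mu>) + \<beta> / ?a)"
  proof (rule sum_mono)
    fix p assume p: "p \<in> ?S"
    obtain t W where pw: "p = (t, W)" by (cases p)
    have "(\<Sum>k<K. \<integral>x. Tk m \<phi> i n id k t W x \<partial>?\<mu>) \<le> (\<Sum>k<K. (\<integral>x. Tk m \<phi> i n g k t W x \<partial>?\<mu>) + \<beta> / ?a)"
      by (rule sum_mono) (use PT p pw in blast)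
    also have "\<dots> = (\<Sum>k<K. \<integral>x. Tk m \<phi> i n g k t W x \<partial>?\<mu>) + real K * (\<beta> / ?a)"
      by (simp add: sum.distrib)
    finally have "(1 / real K) * (\<Sum>k<K. \<integral>x. Tk m \<phi> i n id k t W x \<partial>?\<mu>) \<le>
        (1 / real K) * ((\<Sum>k<K. \<integral>x. Tk m \<phi> i n g k t W x \<partial>?\<mu>) + real K * (\<beta> / ?a))"
      by (rule mult_left_mono) simp
    also have "\<dots> = (1 / real K) * (\<Sum>k<K. \<integral>x. Tk m \<phi> i n g k t W x \<partial>?\<mu>) + \<beta> / ?a"
      using K1 by (simp add: field_simps)
    finally show "(case p of (t, W) \<Rightarrow> (1 / real K) * (\<Sum>k<K. \<integral>x. Tk m \<phi> i n id k t W x \<partial>?\<mu>))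
        \<le> (case p of (t, W) \<Rightarrow> (1 / real K) * (\<Sum>k<K. \<integral>x. Tk m \<phi> i n g k t W x \<partial>?\<mu>) + \<beta> / ?a)"
      unfolding pw by simp
  qed
  also have "\<dots> = (\<Sum>(t, W)\<in>?S. (1 / real K) * (\<Sum>k<K. \<integral>x. Tk m \<phi> i n g k t W x \<partial>?\<mu>)) + real (card ?S) * (\<beta> / ?a)"
    by (simp add: sum.distrib case_prod_beta)
  finally have num: "(\<Sum>(t, W)\<in>?S. (1 / real K) * (\<Sum>k<K. \<integral>x. Tk m \<phi> i n id k t W x \<partial>?\<mu>))
      \<le> (\<Sum>(t, W)\<in>?S. (1 / real K) * (\<Sum>k<K. \<integral>x. Tk m \<phi> i n g k t W x \<partial>?\<mu>)) + real (card ?S) * (\<beta> / ?a)" .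
  have "expected_loss m n K \<phi> s i D id \<le> ((\<Sum>(t, W)\<in>?S. (1 / real K) * (\<Sum>k<K. \<integral>x. Tk m \<phi> i n g k t W x \<partial>?\<mu>)) + real (card ?S) * (\<beta> / ?a)) / real (card ?S)"
    unfolding eid by (rule divide_right_mono[OF num]) (use cS in simp)
  also have "\<dots> = expected_loss m n K \<phi> s i D g + \<beta> / ?a"
    unfolding eg using cS by (simp add: add_divide_distrib)
  finally show ?thesis .
qed



lemma ecdf_01: "0 \<le> ecdf S t" "ecdf S t \<le> 1"
proof -
  have "size (filter_mset (\<lambda>s. s \<le> t) S) \<le> size S" by (rule size_filter_mset_lesseq)
  then show "0 \<le> ecdf S t" "ecdf S t \<le> 1"
    unfolding ecdf_eq by (auto simp: divide_le_eq_1 nonempty_has_size)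
qed

lemma split_loss_01: "0 \<le> split_loss K \<phi> xs P t W" "split_loss K \<phi> xs P t W \<le> 1"
proof -
  define a where "a k = ecdf (image_mset (\<phi> k) (mset xs + image_mset (\<lambda>p. P ! p) (mset_set W))) (\<phi> k (P ! t))" for k
  define b where "b k = ecdf (image_mset (\<phi> k) (image_mset (\<lambda>p. P ! p) (mset_set ({..<length P} - {t} - W)))) (\<phi> k (P ! t))" for k
  have sl: "split_loss K \<phi> xs P t W = (1 / real K) * (\<Sum>k<K. (a k - b k)\<^sup>2)"
    unfolding split_loss_def Let_def a_def b_def by simp
  have sq: "(a k - b k)\<^sup>2 \<le> 1" for k
  proof -
    have "\<bar>a k - b k\<bar> \<le> 1" using ecdf_01[of _ "\<phi> k (P ! t)"] unfolding a_def b_def by (smt (verit))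
    then show ?thesis by (simp add: abs_square_le_1)
  qed
  have "(\<Sum>k<K. (a k - b k)\<^sup>2) \<le> real K" using sum_bounded_above[of "{..<K}" "\<lambda>k. (a k - b k)\<^sup>2" 1] sq by simp
  moreover have "0 \<le> (\<Sum>k<K. (a k - b k)\<^sup>2)" by (rule sum_nonneg) simp
  ultimately show "0 \<le> split_loss K \<phi> xs P t W" "split_loss K \<phi> xs P t W \<le> 1"
    unfolding sl by (auto simp: divide_le_eq_1)
qed

lemma mech_loss_01: "0 \<le> mech_loss K \<phi> s xs P" "mech_loss K \<phi> s xs P \<le> 1"
proof -
  let ?S = "splits (length P) (s (length P))"
  have s0: "0 \<le> (\<Sum>(t, W)\<in>?S. split_loss K \<phi> xs P t W)"
    by (rule sum_nonneg) (auto simp: split_loss_01)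
  have s1: "(\<Sum>(t, W)\<in>?S. split_loss K \<phi> xs P t W) \<le> real (card ?S)"
    using sum_bounded_above[of ?S "\<lambda>(t, W). split_loss K \<phi> xs P t W" 1] by (auto simp: split_loss_01)
  show "0 \<le> mech_loss K \<phi> s xs P" unfolding mech_loss_def Let_def using s0 by simp
  show "mech_loss K \<phi> s xs P \<le> 1" unfolding mech_loss_def Let_def using s0 s1 by (auto simp: divide_le_eq_1)
qed

lemma EL_abs_le1:
  assumes "prob_space D"
  shows "\<bar>expected_loss m n K \<phi> s i D g\<bar> \<le> 1"
proof -
  have "prob_space (data_measure m n D)"
    unfolding data_measure_def by (rule prob_space_PiM, rule prob_space_PiM) (use assms in auto)
  then show ?thesis
    unfolding expected_loss_def
  proof (rule abs_integral_bound_prob)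
    show "\<forall>x\<in>space (data_measure m n D). \<bar>mech_loss K \<phi> s (g (agent_data n x i)) (others_pool m n i x)\<bar> \<le> 1"
    proof
      fix x
      have "0 \<le> mech_loss K \<phi> s (g (agent_data n x i)) (others_pool m n i x)" "mech_loss K \<phi> s (g (agent_data n x i)) (others_pool m n i x) \<le> 1"
        by (rule mech_loss_01)+
      then show "\<bar>mech_loss K \<phi> s (g (agent_data n x i)) (others_pool m n i x)\<bar> \<le> 1" by simp
    qed
  qed
qed

lemma EL_nonneg: "0 \<le> expected_loss m n K \<phi> s i D g"
  unfolding expected_loss_def by (rule integral_nonneg_AE) (simp add: mech_loss_01)

lemma h_meas:
  fixes D0 M :: "'a measure"
  assumes probD: "prob_space D0" and setsD: "sets D0 = sets M" and \<phi>m: "\<forall>k<K. \<phi> k \<in> borel_measurable M"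
    and gm: "strategy_measurable M g" and i_m: "i < m" and ni: "n i \<ge> 1"
    and sN: "s (length (idx m n i)) < length (idx m n i) - 1"
  shows "(\<lambda>x. mech_loss K \<phi> s (g (agent_data n x i)) (others_pool m n i x)) \<in> borel_measurable (data_measure m n M)"
proof -
  let ?N = "length (idx m n i)"
  let ?S = "splits ?N (s ?N)"
  have Tm: "Tk m \<phi> i n g k t W \<in> borel_measurable (data_measure m n D0)" if tW: "(t, W) \<in> ?S" and k: "k < K" for t W k
  proof -
    note sp = splits_props[OF tW]
    have Zne: "card W < ?N - 1" using sp(3) sN by simp
    have \<phi>k: "\<phi> k \<in> borel_measurable M" using \<phi>m k by auto
    note pt = per_term(1)[OF probD setsD \<phi>k gm i_m ni sp(1) sp(2) Zne order.refl]
    then show ?thesis unfolding Tk_def by (rule borel_measurable_integrable)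
  qed
  have "(\<lambda>x. (\<Sum>(t, W)\<in>?S. (1 / real K) * (\<Sum>k<K. Tk m \<phi> i n g k t W x)) / real (card ?S)) \<in> borel_measurable (data_measure m n D0)"
  proof (intro borel_measurable_divide borel_measurable_const borel_measurable_sum)
    fix p assume p: "p \<in> ?S"
    obtain t W where pw: "p = (t, W)" by (cases p)
    have "(\<lambda>x. 1 / real K * (\<Sum>k<K. Tk m \<phi> i n g k t W x)) \<in> borel_measurable (data_measure m n D0)"
      by (intro borel_measurable_times borel_measurable_const borel_measurable_sum) (use Tm p pw in auto)
    then show "(\<lambda>x. case p of (t, W) \<Rightarrow> 1 / real K * (\<Sum>k<K. Tk m \<phi> i n g k t W x)) \<in> borel_measurable (data_measure m n D0)"
      unfolding pw by (simp only: case_prod_conv)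
  qed
  then have "(\<lambda>x. mech_loss K \<phi> s (g (agent_data n x i)) (others_pool m n i x)) \<in> borel_measurable (data_measure m n D0)"
    by (simp only: mech_loss_expand)
  moreover have "sets (data_measure m n D0) = sets (data_measure m n M)"
    unfolding data_measure_def by (intro sets_PiM_cong refl) (simp add: setsD)
  ultimately show ?thesis using measurable_cong_sets by blast
qed

lemma EL_meas:
  fixes D0 M :: "'a measure"
  assumes probD: "prob_space D0" and setsD: "sets D0 = sets M" and \<phi>m: "\<forall>k<K. \<phi> k \<in> borel_measurable M"
    and gm: "strategy_measurable M g" and i_m: "i < m" and ni: "n i \<ge> 1"
    and sN: "s (length (idx m n i)) < length (idx m n i) - 1"
  shows "(\<lambda>D. expected_loss m n K \<phi> s i D g) \<in> borel_measurable (prob_algebra M)"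
proof -
  have h: "(\<lambda>x. mech_loss K \<phi> s (g (agent_data n x i)) (others_pool m n i x)) \<in> borel_measurable (data_measure m n M)"
    by (rule h_meas[where n=n and i=i and m=m and s=s and K=K and \<phi>=\<phi> and g=g and M=M, OF assms])
  have "(\<lambda>\<nu>. integral\<^sup>L \<nu> (\<lambda>x. mech_loss K \<phi> s (g (agent_data n x i)) (others_pool m n i x))) \<in> borel_measurable (subprob_algebra (data_measure m n M))"
    by (rule integral_measurable_subprob_algebra[OF h])
  from measurable_compose[OF measurable_prob_algebraD[OF measurable_data_measure] this]
  show ?thesis unfolding expected_loss_def .
qed

lemma atomless_conv:
  assumes "atomless_feature D f" "f \<in> borel_measurable D"
  shows "measure D {y \<in> space D. f y = t} = 0"
proof -
  have "measure (distr D borel f) {t} = measure D (f -` {t} \<inter> space D)"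
    by (rule measure_distr) (use assms(2) in auto)
  moreover have "f -` {t} \<inter> space D = {y \<in> space D. f y = t}" by auto
  ultimately show ?thesis using assms(1) unfolding atomless_feature_def by simp
qed

lemma beta_bounds:
  fixes D M :: "'a measure"
  assumes probD: "prob_space D" and setsD: "sets D = sets M" and \<psi>M: "\<psi> \<in> borel_measurable M"
    and i_m: "i < m" and ni: "n i \<ge> 1" and N2: "length (idx m n i) \<ge> 2"
  shows "cfg.p1 D \<psi> - cfg.p2 D \<psi> \<le> 1/4"
    and "atomless_feature D \<psi> \<Longrightarrow> cfg.p1 D \<psi> - cfg.p2 D \<psi> \<le> 1/6"
proof -
  have \<psi>D: "\<psi> \<in> borel_measurable D" using \<psi>M measurable_cong_sets[OF setsD refl] by blast
  interpret A: cfg D m n \<psi> by (rule cfg.intro[OF probD \<psi>D])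
  show "A.p1 - A.p2 \<le> 1/4" by (rule A.p_le14)
  assume at: "atomless_feature D \<psi>"
  let ?ix = "idx m n i"
  have c0: "(i, 0) \<in> A.Cd" unfolding A.Cd_def using i_m ni by simp
  have L0: "0 < length ?ix" and L1: "1 < length ?ix" using N2 by linarith+
  have s0: "?ix ! 0 \<in> {c. fst c < m \<and> fst c \<noteq> i \<and> snd c < n (fst c)}"
    unfolding set_idx[of m n i, symmetric] by (rule nth_mem[OF L0])
  have s1: "?ix ! 1 \<in> {c. fst c < m \<and> fst c \<noteq> i \<and> snd c < n (fst c)}"
    unfolding set_idx[of m n i, symmetric] by (rule nth_mem[OF L1])
  have c1: "?ix ! 0 \<in> A.Cd" using s0 unfolding A.Cd_def by simp
  have c2: "?ix ! 1 \<in> A.Cd" using s1 unfolding A.Cd_def by simp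
  have f1: "fst (?ix ! 0) \<noteq> i" using s0 by simp
  have f2: "fst (?ix ! 1) \<noteq> i" using s1 by simp
  have d12: "?ix ! 0 \<noteq> ?ix ! 1"
    using nth_eq_iff_index_eq[OF distinct_idx[of m n i] L0 L1] by simp
  have d01: "(i, 0) \<noteq> ?ix ! 0"
  proof
    assume "(i, 0) = ?ix ! 0"
    then have "fst (?ix ! 0) = i" by (metis fst_conv)
    then show False using f1 by simp
  qed
  have d02: "(i, 0) \<noteq> ?ix ! 1"
  proof
    assume "(i, 0) = ?ix ! 1"
    then have "fst (?ix ! 1) = i" by (metis fst_conv)
    then show False using f2 by simp
  qed
  show "A.p1 - A.p2 \<le> 1/6"
    by (rule A.p_atomless[OF atomless_conv[OF at \<psi>D] c0 c1 c2 d01 d02 d12])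
qed



theorem mainTheorem9:
  fixes M :: "'a measure"
    and m :: nat and n :: "nat \<Rightarrow> nat" and i :: nat
    and K :: nat and \<phi> :: "nat \<Rightarrow> 'a \<Rightarrow> real"
    and s :: "nat \<Rightarrow> nat"
    and f :: "'a list \<Rightarrow> 'a list"
    and Prior :: "'a measure measure"
    and Fam :: "'a measure set"
  assumes m2: "m \<ge> 2"
    and n_pos: "\<forall>j<m. n j \<ge> 1"
    and K_pos: "K \<ge> 1"
    and \<phi>_meas: "\<forall>k<K. \<phi> k \<in> borel_measurable M"
    and s_lt: "\<forall>N\<ge>2. s N < N - 1"
    and i_lt: "i < m"
    and N_ge2: "(\<Sum>j\<in>{..<m} - {i}. n j) \<ge> 2"
    and f_meas: "strategy_measurable M f"
    and Prior_prob: "prob_space Prior"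
    and Prior_sets: "sets Prior = sets (prob_algebra M)"
    and Fam_dists: "\<forall>D\<in>Fam. prob_space D \<and> sets D = sets M"
  defines "N \<equiv> (\<Sum>j\<in>{..<m} - {i}. n j)"
  defines "\<epsilon>1 \<equiv> (1/4) * (1 / real (n i + s N) + 1 / real (N - 1 - s N))"
    and "\<epsilon>2 \<equiv> 1 / (6 * real (n i + s N))"
  defines "EL \<equiv> expected_loss m n K \<phi> s i"
  shows
    "(\<integral>D. EL D id \<partial>Prior) \<le> (\<integral>D. EL D f \<partial>Prior) + \<epsilon>1
     \<and> (SUP D\<in>Fam. EL D id) \<le> (SUP D\<in>Fam. EL D f) + \<epsilon>1
     \<and> ((AE D in Prior. \<forall>k<K. atomless_feature D (\<phi> k))
          \<longrightarrow> (\<integral>D. EL D id \<partial>Prior) \<le> (\<integral>D. EL D f \<partial>Prior) + \<epsilon>2)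
     \<and> ((\<forall>D\<in>Fam. \<forall>k<K. atomless_feature D (\<phi> k))
          \<longrightarrow> (SUP D\<in>Fam. EL D id) \<le> (SUP D\<in>Fam. EL D f) + \<epsilon>2)"
proof -
  have N_eq: "N = length (idx m n i)" unfolding N_def using length_idx[of m n i] by simp
  have N2: "length (idx m n i) \<ge> 2" using N_ge2 N_eq N_def by simp
  have sN: "s (length (idx m n i)) < length (idx m n i) - 1" using s_lt N2 by auto
  have ni: "n i \<ge> 1" using n_pos i_lt by auto
  have a_pos: "real (n i + s N) > 0" using ni by simp
  have e1: "(1/4) / real (n i + s N) \<le> \<epsilon>1"
  proof -
    have z: "0 \<le> 1 / real (N - 1 - s N)" by simp
    have "(1/4) / real (n i + s N) = (1/4) * (1 / real (n i + s N) + 0)" by simp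
    also have "\<dots> \<le> (1/4) * (1 / real (n i + s N) + 1 / real (N - 1 - s N))"
      using z by (intro mult_left_mono add_left_mono) auto
    finally show ?thesis unfolding \<epsilon>1_def .
  qed
  have e1_nonneg: "0 \<le> \<epsilon>1" unfolding \<epsilon>1_def by simp
  have e2: "\<epsilon>2 = (1/6) / real (n i + s N)" unfolding \<epsilon>2_def by simp
  have e2_nonneg: "0 \<le> \<epsilon>2" unfolding \<epsilon>2_def by simp
  have cmp: "EL D id \<le> EL D g + \<beta> / real (n i + s N)"
    if D: "prob_space D" "sets D = sets M" and g: "strategy_measurable M g"
      and b: "\<forall>k<K. cfg.p1 D (\<phi> k) - cfg.p2 D (\<phi> k) \<le> \<beta>" for D g \<beta>
    using EL_compare[where n=n and i=i and m=m and s=s and K=K and \<phi>=\<phi> and g=g and M=M and D=D, OF D \<phi>_meas g i_lt ni K_pos sN b] unfolding EL_def N_eq .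
  have b14: "\<forall>k<K. cfg.p1 D (\<phi> k) - cfg.p2 D (\<phi> k) \<le> 1/4"
    if D: "prob_space D" "sets D = sets M" for D
    using beta_bounds(1)[where n=n and i=i and m=m and M=M and D=D, OF D _ i_lt ni N2] \<phi>_meas by blast
  have b16: "\<forall>k<K. cfg.p1 D (\<phi> k) - cfg.p2 D (\<phi> k) \<le> 1/6"
    if D: "prob_space D" "sets D = sets M" and at: "\<forall>k<K. atomless_feature D (\<phi> k)" for D
    using beta_bounds(2)[where n=n and i=i and m=m and M=M and D=D, OF D _ i_lt ni N2] \<phi>_meas at by blast
  have pt1: "EL D id \<le> EL D f + \<epsilon>1" if D: "prob_space D" "sets D = sets M" for D
    using cmp[OF D f_meas b14[OF D]] e1 by simp
  have pt2: "EL D id \<le> EL D f + \<epsilon>2"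
    if D: "prob_space D" "sets D = sets M" and at: "\<forall>k<K. atomless_feature D (\<phi> k)" for D
    using cmp[OF D f_meas b16[OF D at]] e2 by simp
  have bnd: "\<bar>EL D g\<bar> \<le> 1" if "prob_space D" for D g
    unfolding EL_def by (rule EL_abs_le1[OF that])
  have nn: "0 \<le> EL D g" for D g unfolding EL_def by (rule EL_nonneg)
  interpret PR: prob_space Prior by (rule Prior_prob)
  have spP: "space Prior = {D. sets D = sets M \<and> prob_space D}"
    using sets_eq_imp_space_eq[OF Prior_sets] by (simp add: space_prob_algebra)
  obtain D0 where D0: "D0 \<in> space Prior" using PR.not_empty by blast
  have D0p: "prob_space D0" "sets D0 = sets M" using D0 spP by auto
  have measP: "(\<lambda>D. EL D g) \<in> borel_measurable Prior" if g: "strategy_measurable M g" for g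
  proof -
    have "(\<lambda>D. expected_loss m n K \<phi> s i D g) \<in> borel_measurable (prob_algebra M)"
      by (rule EL_meas[where n=n and i=i and m=m and s=s and K=K and \<phi>=\<phi> and g=g and M=M, OF D0p \<phi>_meas g i_lt ni sN])
    then show ?thesis unfolding EL_def using measurable_cong_sets[OF Prior_sets refl] by blast
  qed
  have intP: "integrable Prior (\<lambda>D. EL D g)" if g: "strategy_measurable M g" for g
    by (rule integrable_bounded_prob[OF Prior_prob measP[OF g], where B=1]) (use bnd spP in auto)
  have idm: "strategy_measurable M id" by (rule strategy_measurable_id)
  have P1: "(\<integral>D. EL D id \<partial>Prior) \<le> (\<integral>D. EL D f \<partial>Prior) + \<epsilon>1"
  proof -
    have "(\<integral>D. EL D id \<partial>Prior) \<le> (\<integral>D. EL D f + \<epsilon>1 \<partial>Prior)"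
      by (rule integral_mono[OF intP[OF idm]]) (use intP[OF f_meas] pt1 spP in auto)
    also have "\<dots> = (\<integral>D. EL D f \<partial>Prior) + \<epsilon>1"
      using intP[OF f_meas] by (simp add: PR.prob_space)
    finally show ?thesis .
  qed
  have P2: "(\<integral>D. EL D id \<partial>Prior) \<le> (\<integral>D. EL D f \<partial>Prior) + \<epsilon>2"
    if at: "AE D in Prior. \<forall>k<K. atomless_feature D (\<phi> k)"
  proof -
    have "(\<integral>D. EL D id \<partial>Prior) \<le> (\<integral>D. EL D f + \<epsilon>2 \<partial>Prior)"
    proof (rule integral_mono_AE[OF intP[OF idm]])
      show "integrable Prior (\<lambda>D. EL D f + \<epsilon>2)" using intP[OF f_meas] by simp
      show "AE D in Prior. EL D id \<le> EL D f + \<epsilon>2"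
        using at AE_space[of Prior] by eventually_elim (use pt2 spP in auto)
    qed
    also have "\<dots> = (\<integral>D. EL D f \<partial>Prior) + \<epsilon>2"
      using intP[OF f_meas] by (simp add: PR.prob_space)
    finally show ?thesis .
  qed
  have F: "(SUP D\<in>Fam. EL D id) \<le> (SUP D\<in>Fam. EL D f) + \<epsilon>"
    if pt: "\<And>D. D \<in> Fam \<Longrightarrow> EL D id \<le> EL D f + \<epsilon>" and e0: "0 \<le> \<epsilon>" for \<epsilon>
  proof (cases "Fam = {}")
    case True then show ?thesis using e0 by simp
  next
    case False
    have bdd: "bdd_above ((\<lambda>D. EL D f) ` Fam)"
      by (rule bdd_aboveI[where M=1]) (use bnd Fam_dists in \<open>auto simp: abs_le_iff\<close>)
    show ?thesis
    proof (rule cSUP_least[OF False])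
      fix D assume D: "D \<in> Fam"
      have "EL D f \<le> (SUP D\<in>Fam. EL D f)" by (rule cSUP_upper[OF D bdd])
      then show "EL D id \<le> (SUP D\<in>Fam. EL D f) + \<epsilon>" using pt[OF D] by simp
    qed
  qed
  have F1: "(SUP D\<in>Fam. EL D id) \<le> (SUP D\<in>Fam. EL D f) + \<epsilon>1"
    by (rule F[OF _ e1_nonneg]) (use pt1 Fam_dists in auto)
  have F2: "(SUP D\<in>Fam. EL D id) \<le> (SUP D\<in>Fam. EL D f) + \<epsilon>2"
    if at: "\<forall>D\<in>Fam. \<forall>k<K. atomless_feature D (\<phi> k)"
    by (rule F[OF _ e2_nonneg]) (use pt2 Fam_dists at in auto)
  show ?thesis using P1 P2 F1 F2 by blast
qed


end
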